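(* Let $\rho\colon\mathrm{Isom}(\mathbf H^1_{\mathbb C})_o\to\mathrm{Isom}(\mathbf H^\infty_{\mathbb C})_o$ be irreducible, with $\eta_1,\eta_2,E,K,c$ as in the context. Then the isometry $\rho(\sigma)$ can be represented, with respect to $\mathbb C\eta_1\oplus\mathbb C\eta_2\oplus E$, by $$\begin{pmatrix}0&\nu^{-1}&0\\ \nu&0&0\\0&0&A\end{pmatrix}$$ for some $\nu>0$ and some unitary map $A$ of $E$ satisfying $A\,c(b)=\nu K(b)\,c(-1/b)$ for every $b\in\mathbb R\setminus\{0\}$.
   Context: $\mathcal H$: separable complex Hilbert space with strongly non-degenerate Hermitian form $B$ (linear in the first variable) of signature $(1,\infty)$; $\mathbf H^\infty_{\mathbb C}=\{[v]:B(v,v)>0\}$, $\cosh d([v],[w])=|B(v,w)|/\sqrt{B(v,v)B(w,w)}$, boundary = isotropic lines, $\mathrm{Isom}(\mathbf H^\infty_{\mathbb C})_o=PU(B)$. $\mathbf H^1_{\mathbb C}$: $\mathbb C^2$ with $B(z,w)=z_1\bar w_1-z_2\bar w_2$, $\xi_1=(e_1+e_2)/\sqrt2$, $\xi_2=(e_1-e_2)/\sqrt2$; $g(\lambda,b)\in SU(1,1)$ has matrix $\begin{pmatrix}\lambda&ib\\0&\lambda^{-1}\end{pmatrix}$ in basis $(\xi_1,\xi_2)$; $\sigma$ is the isometry induced by $s=\begin{pmatrix}0&i\\i&0\end{pmatrix}$ in that basis. Representations are orbitally continuous; irreducible = no fixed point in $\mathbf H^\infty_{\mathbb C}\cup\partial\mathbf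 H^\infty_{\mathbb C}$, no invariant pair of boundary points, no proper invariant complex hyperbolic subspace. For such $\rho$: $\eta_1\in\partial\mathbf H^\infty_{\mathbb C}$ is the unique common fixed point of all $\rho(g(\lambda,b))$, $\eta_2$ the other endpoint of the common axis of the $\rho(g(\lambda,0))$, $\lambda\ne1$; isotropic representatives satisfy $B(\eta_1,\eta_2)=1$; $E=\eta_1^\perp\cap\eta_2^\perp$. For $b\in\mathbb R$, the lift $T_b\in U(B)$ of $\rho(g(1,b))$ with $T_b\eta_1=\eta_1$ satisfies $T_b\eta_2=K(b)\eta_1+\eta_2+c(b)$ with $K(b)\in\mathbb C$, $c(b)\in E$. *)

theory Defs
  imports "HOL-Analysis.Analysis"
begin

text \<open>Up to isomorphism, H = C (+) l2(N): vectors are square-summable sequences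
  v : nat => complex; coordinate 0 is the positive direction, coordinates
  Suc n the negative directions.  B is linear in the first variable.\<close>

type_synonym vec = "nat \<Rightarrow> complex"

definition Hsp :: "vec set" where
  "Hsp = {v. summable (\<lambda>n. (cmod (v n))\<^sup>2)}"

definition Bf :: "vec \<Rightarrow> vec \<Rightarrow> complex" where
  "Bf v w = v 0 * cnj (w 0) - (\<Sum>n. v (Suc n) * cnj (w (Suc n)))"

definition vzero :: vec where "vzero = (\<lambda>_. 0)"
definition vadd :: "vec \<Rightarrow> vec \<Rightarrow> vec" where "vadd v w = (\<lambda>n. v n + w n)"
definition vsc :: "complex \<Rightarrow> vec \<Rightarrow> vec" where "vsc a v = (\<lambda>n. a * v n)"

definition l2norm :: "vec \<Rightarrow> real" where
  "l2norm v = sqrt (\<Sum>n. (cmod (v n))\<^sup>2)"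

definition clinear_on :: "vec set \<Rightarrow> (vec \<Rightarrow> vec) \<Rightarrow> bool" where
  "clinear_on S T \<longleftrightarrow>
     (\<forall>v\<in>S. \<forall>w\<in>S. T (vadd v w) = vadd (T v) (T w)) \<and>
     (\<forall>a. \<forall>v\<in>S. T (vsc a v) = vsc a (T v))"

definition UB :: "(vec \<Rightarrow> vec) set" where
  "UB = {T. T ` Hsp = Hsp \<and> inj_on T Hsp \<and> clinear_on Hsp T \<and>
            (\<forall>v\<in>Hsp. \<forall>w\<in>Hsp. Bf (T v) (T w) = Bf v w)}"

text \<open>Two elements of U(B) define the same element of PU(B).\<close>
definition proj_eq :: "(vec \<Rightarrow> vec) \<Rightarrow> (vec \<Rightarrow> vec) \<Rightarrow> bool" where
  "proj_eq S T \<longleftrightarrow> (\<exists>u. cmod u = 1 \<and> (\<forall>v\<in>Hsp. S v = vsc u (T v)))"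

text \<open>The (projective) point [v] is fixed by (the isometry induced by) T.\<close>
definition fixes_line :: "(vec \<Rightarrow> vec) \<Rightarrow> vec \<Rightarrow> bool" where
  "fixes_line T v \<longleftrightarrow> (\<exists>a. T v = vsc a v)"

definition same_line :: "vec \<Rightarrow> vec \<Rightarrow> bool" where
  "same_line v w \<longleftrightarrow> (\<exists>a. v = vsc a w)"

text \<open>Nonzero vectors with B(v,v) > 0 represent points of the complex hyperbolic space;
  nonzero isotropic vectors represent boundary points.\<close>
definition pos_vec :: "vec \<Rightarrow> bool" where
  "pos_vec v \<longleftrightarrow> v \<in> Hsp \<and> Re (Bf v v) > 0"

definition isotropic :: "vec \<Rightarrow> bool" where
  "isotropic v \<longleftrightarrow> v \<in> Hsp \<and> v \<noteq> vzero \<and> Bf v v = 0"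

definition hdist :: "vec \<Rightarrow> vec \<Rightarrow> real" where
  "hdist v w = arcosh (cmod (Bf v w) / sqrt (Re (Bf v v) * Re (Bf w w)))"

text \<open>Closed complex linear subspaces of H, and complex hyperbolic subspaces
  (projectivised positive part of a closed complex subspace meeting the positive cone).\<close>
definition csubspace :: "vec set \<Rightarrow> bool" where
  "csubspace W \<longleftrightarrow> W \<subseteq> Hsp \<and> vzero \<in> W \<and>
     (\<forall>v\<in>W. \<forall>w\<in>W. vadd v w \<in> W) \<and> (\<forall>a. \<forall>v\<in>W. vsc a v \<in> W)"

definition closed_in_H :: "vec set \<Rightarrow> bool" where
  "closed_in_H W \<longleftrightarrow> (\<forall>X v. (\<forall>k. X k \<in> W) \<and> v \<in> Hsp \<and>
       (\<lambda>k. l2norm (\<lambda>n. X k n - v n)) \<longlonglongrightarrow> 0 \<longrightarrow> v \<in> W)"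

definition hyp_subspace :: "vec set \<Rightarrow> bool" where
  "hyp_subspace W \<longleftrightarrow> csubspace W \<and> closed_in_H W \<and> (\<exists>v\<in>W. pos_vec v)"

definition Eperp :: "vec \<Rightarrow> vec \<Rightarrow> vec set" where
  "Eperp e1 e2 = {v \<in> Hsp. Bf v e1 = 0 \<and> Bf v e2 = 0}"

definition B2 :: "complex^2 \<Rightarrow> complex^2 \<Rightarrow> complex" where
  "B2 z w = z$1 * cnj (w$1) - z$2 * cnj (w$2)"

definition SU11 :: "(complex^2^2) set" where
  "SU11 = {M. det M = 1 \<and> (\<forall>z w. B2 (M *v z) (M *v w) = B2 z w)}"

text \<open>xi1 = (e1+e2)/sqrt 2, xi2 = (e1-e2)/sqrt 2; Pxi has columns xi1, xi2
  (it is its own inverse), so the matrix in the standard basis of a map whose matrix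
  in the basis (xi1, xi2) is G is Pxi ** G ** Pxi.\<close>
definition xi1 :: "complex^2" where
  "xi1 = vector [complex_of_real (1 / sqrt 2), complex_of_real (1 / sqrt 2)]"
definition xi2 :: "complex^2" where
  "xi2 = vector [complex_of_real (1 / sqrt 2), - complex_of_real (1 / sqrt 2)]"

definition Pxi :: "complex^2^2" where
  "Pxi = (\<chi> i j. if j = 1 then xi1 $ i else xi2 $ i)"

definition gmat :: "real \<Rightarrow> real \<Rightarrow> complex^2^2" where
  "gmat l b = Pxi ** (vector [vector [complex_of_real l, \<i> * complex_of_real b],
                               vector [0, complex_of_real (1 / l)]] :: complex^2^2) ** Pxi"

definition smat :: "complex^2^2" where
  "smat = Pxi ** (vector [vector [0, \<i>], vector [\<i>, 0]] :: complex^2^2) ** Pxi"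

text \<open>A representation of Isom(H^1_C)_o = PU(1,1) = SU(1,1)/{+-1} into PU(B) is
  encoded by choosing, for each M in SU(1,1), a lift rho M in U(B); the lifts are
  multiplicative up to unimodular scalars and -M has the same image as M.\<close>
definition is_rep :: "(complex^2^2 \<Rightarrow> vec \<Rightarrow> vec) \<Rightarrow> bool" where
  "is_rep \<rho> \<longleftrightarrow>
     (\<forall>M\<in>SU11. \<rho> M \<in> UB) \<and>
     (\<forall>M\<in>SU11. \<forall>N\<in>SU11. proj_eq (\<rho> (M ** N)) (\<rho> M \<circ> \<rho> N)) \<and>
     (\<forall>M\<in>SU11. proj_eq (\<rho> (- M)) (\<rho> M))"

definition orbitally_continuous :: "(complex^2^2 \<Rightarrow> vec \<Rightarrow> vec) \<Rightarrow> bool" where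
  "orbitally_continuous \<rho> \<longleftrightarrow>
     (\<forall>v. pos_vec v \<longrightarrow> (\<forall>M0\<in>SU11. \<forall>\<epsilon>>0. \<exists>\<delta>>0. \<forall>M\<in>SU11.
         dist M M0 < \<delta> \<longrightarrow> hdist (\<rho> M v) (\<rho> M0 v) < \<epsilon>))"

definition irreducible_rep :: "(complex^2^2 \<Rightarrow> vec \<Rightarrow> vec) \<Rightarrow> bool" where
  "irreducible_rep \<rho> \<longleftrightarrow>
     \<comment> \<open>no fixed point in H^infty_C \<union> its boundary\<close>
     \<not> (\<exists>v. v \<in> Hsp \<and> v \<noteq> vzero \<and> Re (Bf v v) \<ge> 0 \<and> (\<forall>M\<in>SU11. fixes_line (\<rho> M) v)) \<and>
     \<comment> \<open>no invariant pair of boundary points\<close>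
     \<not> (\<exists>v w. isotropic v \<and> isotropic w \<and> \<not> same_line v w \<and>
          (\<forall>M\<in>SU11. (same_line (\<rho> M v) v \<and> same_line (\<rho> M w) w) \<or>
                     (same_line (\<rho> M v) w \<and> same_line (\<rho> M w) v))) \<and>
     \<comment> \<open>no proper invariant complex hyperbolic subspace\<close>
     \<not> (\<exists>W. hyp_subspace W \<and> W \<noteq> Hsp \<and> (\<forall>M\<in>SU11. \<rho> M ` W \<subseteq> W))"

end

theory Submission
  imports Defs
begin


lemma Pxi_alt: "Pxi = (vector [vector [complex_of_real (1/sqrt 2), complex_of_real (1/sqrt 2)], vector [complex_of_real (1/sqrt 2), - complex_of_real (1/sqrt 2)]] :: complex^2^2)"
  by (simp add: Pxi_def xi1_def xi2_def vec_eq_iff forall_2)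

lemma ss: "complex_of_real (1/sqrt 2) * complex_of_real (1/sqrt 2) = 1/2"
  by (simp flip: of_real_mult)

lemma cx_gen: fixes s :: complex and X :: "complex^2^2" assumes h: "s * s = 1/2"
  shows "(vector [vector [s, s], vector [s, -s]] :: complex^2^2) ** X ** (vector [vector [s, s], vector [s, -s]]) = (vector [vector [(X$1$1+X$1$2+X$2$1+X$2$2)/2, (X$1$1-X$1$2+X$2$1-X$2$2)/2],
   vector [(X$1$1+X$1$2-X$2$1-X$2$2)/2, (X$1$1-X$1$2-X$2$1+X$2$2)/2]] :: complex^2^2)"
proof -
  have h2: "s * (s * x) = x / 2" for x using h by (metis mult.assoc mult.commute times_divide_eq_right mult_1_right)
  show ?thesis
  apply (simp add: vec_eq_iff forall_2 matrix_matrix_mult_def sum_2)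
  apply (simp add: algebra_simps h h2 add_divide_distrib diff_divide_distrib)
  done
qed

lemma cx_explicit: "Pxi ** X ** Pxi = (vector [vector [(X$1$1+X$1$2+X$2$1+X$2$2)/2, (X$1$1-X$1$2+X$2$1-X$2$2)/2],
   vector [(X$1$1+X$1$2-X$2$1-X$2$2)/2, (X$1$1-X$1$2-X$2$1+X$2$2)/2]] :: complex^2^2)"
  unfolding Pxi_alt by (rule cx_gen[OF ss])

lemma Pxi_sq: "Pxi ** Pxi = mat 1"
proof -
  have "Pxi ** mat 1 ** Pxi = mat 1" unfolding cx_explicit by (simp add: vec_eq_iff forall_2 mat_def)
  thus ?thesis by simp
qed

definition cx :: "complex^2^2 \<Rightarrow> complex^2^2" where "cx X = Pxi ** X ** Pxi"

lemma cx_mult: "cx X ** cx Y = cx (X ** Y)"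
  unfolding cx_def by (metis Pxi_sq matrix_mul_assoc matrix_mul_rid)

lemma cx_inv: "cx (cx M) = M"
  unfolding cx_def by (metis Pxi_sq matrix_mul_assoc matrix_mul_rid matrix_mul_lid)

lemma cx_neg: "cx (- X) = - cx X"
  unfolding cx_explicit cx_def by (simp add: vec_eq_iff forall_2 field_simps)

definition gm :: "real \<Rightarrow> real \<Rightarrow> complex^2^2" where
  "gm l b = vector [vector [complex_of_real l, \<i> * complex_of_real b], vector [0, complex_of_real (1 / l)]]"
definition sm :: "complex^2^2" where "sm = vector [vector [0, \<i>], vector [\<i>, 0]]"

lemma gmat_cx: "gmat l b = cx (gm l b)" unfolding gmat_def gm_def cx_def ..
lemma smat_cx: "smat = cx sm" unfolding smat_def sm_def cx_def ..

definition Bx :: "complex^2 \<Rightarrow> complex^2 \<Rightarrow> complex" where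
  "Bx u v = u$1 * cnj (v$2) + u$2 * cnj (v$1)"

lemma B2_Pxi: "B2 (Pxi *v u) (Pxi *v v) = Bx u v"
proof -
  have h: "complex_of_real (1/sqrt 2) * complex_of_real (1/sqrt 2) = 1/2" by (rule ss)
  have h2: "complex_of_real (1/sqrt 2) * (complex_of_real (1/sqrt 2) * x) = x / 2" for x
    using h by (metis mult.assoc mult.commute times_divide_eq_right mult_1_right)
  show ?thesis unfolding Pxi_alt B2_def Bx_def
    by (simp add: matrix_vector_mult_def sum_2 algebra_simps h h2 flip: of_real_mult)
qed

lemma Pxi_v: "Pxi *v (Pxi *v z) = z"
  by (metis Pxi_sq matrix_vector_mul_assoc matrix_vector_mul_lid)

lemma cx_v: "cx X *v z = Pxi *v (X *v (Pxi *v z))"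
  unfolding cx_def by (simp add: matrix_vector_mul_assoc matrix_mul_assoc)

lemma det_cx: "det (cx X) = det X"
proof -
  have "det Pxi * det Pxi = 1" using Pxi_sq by (metis det_I det_mul)
  thus ?thesis unfolding cx_def det_mul by (simp add: algebra_simps)
qed

lemma SU11_cx_iff: "cx X \<in> SU11 \<longleftrightarrow> det X = 1 \<and> (\<forall>u v. Bx (X *v u) (X *v v) = Bx u v)"
proof -
  have "(\<forall>z w. B2 (cx X *v z) (cx X *v w) = B2 z w) \<longleftrightarrow> (\<forall>u v. Bx (X *v u) (X *v v) = Bx u v)"
  proof
    assume h: "\<forall>z w. B2 (cx X *v z) (cx X *v w) = B2 z w"
    show "\<forall>u v. Bx (X *v u) (X *v v) = Bx u v"
    proof (intro allI)
      fix u v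
      have "B2 (cx X *v (Pxi *v u)) (cx X *v (Pxi *v v)) = B2 (Pxi *v u) (Pxi *v v)" using h by blast
      thus "Bx (X *v u) (X *v v) = Bx u v" by (simp add: cx_v Pxi_v B2_Pxi)
    qed
  next
    assume h: "\<forall>u v. Bx (X *v u) (X *v v) = Bx u v"
    show "\<forall>z w. B2 (cx X *v z) (cx X *v w) = B2 z w"
    proof (intro allI)
      fix z w
      have "B2 z w = Bx (Pxi *v z) (Pxi *v w)" by (metis B2_Pxi Pxi_v)
      thus "B2 (cx X *v z) (cx X *v w) = B2 z w" by (simp add: cx_v B2_Pxi h)
    qed
  qed
  thus ?thesis unfolding SU11_def by (simp add: det_cx)
qed

lemma det2: "det (A::complex^2^2) = A$1$1 * A$2$2 - A$1$2 * A$2$1"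
  by (simp add: det_2)

lemma gm_SU: assumes "l \<noteq> 0" shows "gmat l b \<in> SU11"
  unfolding gmat_cx SU11_cx_iff
  using assms by (simp add: det2 gm_def Bx_def matrix_vector_mult_def sum_2 algebra_simps)

lemma sm_SU: "smat \<in> SU11"
  unfolding smat_cx SU11_cx_iff
  by (simp add: det2 sm_def Bx_def matrix_vector_mult_def sum_2 algebra_simps)

lemma SU_mult: "M \<in> SU11 \<Longrightarrow> N \<in> SU11 \<Longrightarrow> M ** N \<in> SU11"
  unfolding SU11_def by (simp add: det_mul matrix_vector_mul_assoc[symmetric])

lemma rel2: "l \<noteq> 0 \<Longrightarrow> gmat l 0 ** gmat 1 b = gmat 1 (l^2*b) ** gmat l 0"
  unfolding gmat_cx cx_mult
  apply (rule arg_cong[where f=cx])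
  by (simp add: gm_def vec_eq_iff forall_2 matrix_matrix_mult_def sum_2 field_simps power2_eq_square)

lemma rel3: "l \<noteq> 0 \<Longrightarrow> gmat l b = gmat 1 (b*l) ** gmat l 0"
  unfolding gmat_cx cx_mult
  apply (rule arg_cong[where f=cx])
  by (simp add: gm_def vec_eq_iff forall_2 matrix_matrix_mult_def sum_2 field_simps)

lemma rel4: "l \<noteq> 0 \<Longrightarrow> smat ** gmat (1/l) 0 = gmat l 0 ** smat"
  unfolding gmat_cx smat_cx cx_mult
  apply (rule arg_cong[where f=cx])
  by (simp add: gm_def sm_def vec_eq_iff forall_2 matrix_matrix_mult_def sum_2 field_simps)

lemma rel5: "b \<noteq> 0 \<Longrightarrow> smat ** gmat 1 b ** smat = - (gmat 1 (-1/b) ** gmat (1/b) 0 ** smat ** gmat 1 (-1/b))"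
  unfolding gmat_cx smat_cx cx_mult cx_neg[symmetric]
  apply (rule arg_cong[where f=cx])
  by (simp add: gm_def sm_def vec_eq_iff forall_2 matrix_matrix_mult_def sum_2 field_simps)

lemma real_form: "cnj z = z \<Longrightarrow> z = complex_of_real (Re z)"
  by (simp add: complex_eq_iff)

lemma imag_form: "cnj z = - z \<Longrightarrow> z = \<i> * complex_of_real (Im z)"
  by (simp add: complex_eq_iff)

lemma bruhat:
  assumes M: "M \<in> SU11"
  shows "(\<exists>l b. l \<noteq> 0 \<and> M = gmat l b) \<or> (\<exists>l b1 b2. l \<noteq> 0 \<and> M = gmat l b1 ** smat ** gmat 1 b2)"
proof -
  define X where "X = cx M"
  have MX: "M = cx X" unfolding X_def cx_inv ..
  have SX: "det X = 1" "\<And>u v. Bx (X *v u) (X *v v) = Bx u v" using M unfolding MX SU11_cx_iff by auto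
  define p where "p = X$1$1"
  define q where "q = X$1$2"
  define r where "r = X$2$1"
  define t where "t = X$2$2"
  have Xe: "X = vector [vector [p, q], vector [r, t]]"
    unfolding p_def q_def r_def t_def by (simp add: vec_eq_iff forall_2)
  have h1: "p * cnj r + r * cnj p = 0"
    using SX(2)[of "vector [1,0]" "vector [1,0]"] unfolding Xe
    by (simp add: Bx_def matrix_vector_mult_def sum_2)
  have h2: "p * cnj t + r * cnj q = 1"
    using SX(2)[of "vector [1,0]" "vector [0,1]"] unfolding Xe
    by (simp add: Bx_def matrix_vector_mult_def sum_2)
  have h3: "q * cnj t + t * cnj q = 0"
    using SX(2)[of "vector [0,1]" "vector [0,1]"] unfolding Xe
    by (simp add: Bx_def matrix_vector_mult_def sum_2)
  have h4: "p * t - q * r = 1" using SX(1) unfolding Xe det2 by simp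
  have h2c: "cnj p * t + cnj r * q = 1" using arg_cong[OF h2, of cnj] by simp
  have ct: "cnj t = t"
  proof -
    have a: "t * cnj q = - (q * cnj t)" using h3 by (simp add: eq_neg_iff_add_eq_0 add.commute)
    have "t = t * (p * cnj t + r * cnj q)" using h2 by simp
    also have "\<dots> = cnj t * (p * t) + r * (t * cnj q)" by (simp add: algebra_simps)
    also have "\<dots> = cnj t * (p * t - q * r)" unfolding a by (simp add: algebra_simps)
    finally show ?thesis using h4 by simp
  qed
  have cp: "cnj p = p"
  proof -
    have a: "p * cnj r = - (r * cnj p)" using h1 by (simp add: eq_neg_iff_add_eq_0)
    have "p = p * (cnj p * t + cnj r * q)" using h2c by simp
    also have "\<dots> = cnj p * (p * t) + (p * cnj r) * q" by (simp add: algebra_simps)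
    also have "\<dots> = cnj p * (p * t - q * r)" unfolding a by (simp add: algebra_simps)
    finally show ?thesis using h4 by simp
  qed
  have cq: "cnj q = - q"
  proof -
    have a: "q * cnj t = - (t * cnj q)" using h3 by (simp add: eq_neg_iff_add_eq_0)
    have "q = q * (p * cnj t + r * cnj q)" using h2 by simp
    also have "\<dots> = p * (q * cnj t) + r * q * cnj q" by (simp add: algebra_simps)
    also have "\<dots> = - cnj q * (p * t - q * r)" unfolding a by (simp add: algebra_simps)
    finally have "q = - cnj q" using h4 by simp
    thus ?thesis by (metis minus_minus)
  qed
  have cr: "cnj r = - r"
  proof -
    have a: "r * cnj p = - (p * cnj r)" using h1 by (simp add: eq_neg_iff_add_eq_0 add.commute)
    have "r = r * (cnj p * t + cnj r * q)" using h2c by simp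
    also have "\<dots> = (r * cnj p) * t + r * cnj r * q" by (simp add: algebra_simps)
    also have "\<dots> = - cnj r * (p * t - q * r)" unfolding a by (simp add: algebra_simps)
    finally have "r = - cnj r" using h4 by simp
    thus ?thesis by (metis minus_minus)
  qed
  define P where "P = Re p"
  define Q where "Q = Im q"
  define R where "R = Im r"
  define T where "T = Re t"
  have pe: "p = complex_of_real P" unfolding P_def using real_form[OF cp] .
  have te: "t = complex_of_real T" unfolding T_def using real_form[OF ct] .
  have qe: "q = \<i> * complex_of_real Q" unfolding Q_def using imag_form[OF cq] .
  have re: "r = \<i> * complex_of_real R" unfolding R_def using imag_form[OF cr] .
  have det: "P * T + Q * R = 1"
  proof -
    have "complex_of_real (P * T + Q * R) = 1" using h4 unfolding pe te qe re by (simp add: algebra_simps)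
    thus ?thesis using of_real_eq_1_iff by blast
  qed
  show ?thesis
  proof (cases "R = 0")
    case True
    hence PT: "P * T = 1" using det by simp
    hence P0: "P \<noteq> 0" by auto
    have "T = 1 / P" using PT P0 by (simp add: field_simps)
    hence "X = gm P Q" unfolding Xe pe te qe re gm_def using True by (simp add: vec_eq_iff forall_2)
    thus ?thesis using P0 MX gmat_cx by auto
  next
    case False
    have "X = gm (1/R) (-P) ** sm ** gm 1 (-T/R)"
      unfolding Xe pe te qe re gm_def sm_def using False det
      apply (simp add: vec_eq_iff forall_2 matrix_matrix_mult_def sum_2 field_simps)
      apply (simp flip: of_real_mult of_real_add of_real_diff add: algebra_simps)
      apply (metis distrib_left of_real_add of_real_1 mult.right_neutral)
      done
    hence "M = gmat (1/R) (-P) ** smat ** gmat 1 (-T/R)" unfolding MX gmat_cx smat_cx cx_mult by simp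
    moreover have "1/R \<noteq> 0" using False by simp
    ultimately show ?thesis by blast
  qed
qed

lemma gmat_lin: "gmat 1 x = gmat 1 0 + x *\<^sub>R cx (vector [vector [0, \<i>], vector [0, 0]])"
  unfolding gmat_cx cx_def cx_explicit gm_def
  by (simp add: vec_eq_iff forall_2 field_simps complex_eq_iff)

lemma gmat_near: assumes "\<delta> > 0" shows "\<exists>t>0. dist (gmat 1 (t*b)) (gmat 1 0) < \<delta>"
proof -
  define D where "D = cx (vector [vector [0, \<i>], vector [0, 0]])"
  define t where "t = \<delta> / (2 * (norm D * \<bar>b\<bar> + 1))"
  have dpos: "norm D * \<bar>b\<bar> + 1 > 0" by (simp add: add_nonneg_pos)
  have tpos: "t > 0" unfolding t_def using assms dpos by simp
  have "dist (gmat 1 (t*b)) (gmat 1 0) = \<bar>t*b\<bar> * norm D"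
    unfolding dist_norm using gmat_lin[of "t*b"] D_def by simp
  also have "\<dots> = t * (norm D * \<bar>b\<bar>)" using tpos by (simp add: abs_mult)
  also have "\<dots> < t * (2 * (norm D * \<bar>b\<bar> + 1))" proof -
    have nn: "0 \<le> norm D * \<bar>b\<bar>" by simp
    have lt: "norm D * \<bar>b\<bar> < 2 * (norm D * \<bar>b\<bar> + 1)" using nn by (smt (verit))
    show ?thesis using mult_strict_left_mono[OF lt tpos] .
  qed
  also have "\<dots> = \<delta>" proof -
    have ne: "2 * (norm D * \<bar>b\<bar> + 1) \<noteq> 0" using dpos by simp
    show ?thesis unfolding t_def using ne by simp
  qed
  finally show ?thesis using tpos by blast
qed




lemma sq2: "((a::real) + b)\<^sup>2 \<le> 2 * a\<^sup>2 + 2 * b\<^sup>2"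
proof -
  have "(a + b)\<^sup>2 + (a - b)\<^sup>2 = 2 * a\<^sup>2 + 2 * b\<^sup>2" by (simp add: power2_eq_square algebra_simps)
  moreover have "(a - b)\<^sup>2 \<ge> 0" by simp
  ultimately show ?thesis by linarith
qed

lemma ab2: "(a::real) * b \<le> a\<^sup>2 + b\<^sup>2"
proof -
  have "2 * (a * b) + (a - b)\<^sup>2 = a\<^sup>2 + b\<^sup>2" by (simp add: power2_eq_square algebra_simps)
  moreover have "(a - b)\<^sup>2 \<ge> 0" "a\<^sup>2 \<ge> 0" "b\<^sup>2 \<ge> 0" by simp_all
  ultimately show ?thesis by linarith
qed

lemma Hsp_add[simp,intro]: "v \<in> Hsp \<Longrightarrow> w \<in> Hsp \<Longrightarrow> (\<lambda>n. v n + w n) \<in> Hsp"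
proof -
  assume v: "v \<in> Hsp" and w: "w \<in> Hsp"
  have sv: "summable (\<lambda>n. (cmod (v n))\<^sup>2)" and sw: "summable (\<lambda>n. (cmod (w n))\<^sup>2)"
    using v w unfolding Hsp_def by auto
  have A: "summable (\<lambda>n. 2 * (cmod (v n))\<^sup>2 + 2 * (cmod (w n))\<^sup>2)"
    using sv sw by (intro summable_add summable_mult) auto
  have B: "norm ((cmod (v n + w n))\<^sup>2) \<le> 2 * (cmod (v n))\<^sup>2 + 2 * (cmod (w n))\<^sup>2" for n
  proof -
    have "cmod (v n + w n) \<le> cmod (v n) + cmod (w n)" by (rule norm_triangle_ineq)
    hence "(cmod (v n + w n))\<^sup>2 \<le> (cmod (v n) + cmod (w n))\<^sup>2" by (simp add: power_mono)
    also have "\<dots> \<le> 2 * (cmod (v n))\<^sup>2 + 2 * (cmod (w n))\<^sup>2"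
      by (rule sq2)
    finally show ?thesis by simp
  qed
  have "summable (\<lambda>n. (cmod (v n + w n))\<^sup>2)"
    by (rule summable_comparison_test'[OF A]) (rule B)
  thus ?thesis unfolding Hsp_def by simp
qed

lemma Hsp_sc[simp,intro]: "v \<in> Hsp \<Longrightarrow> (\<lambda>n. a * v n) \<in> Hsp"
  unfolding Hsp_def by (simp add: norm_mult power_mult_distrib summable_mult)

lemma Hsp_zero[simp,intro]: "(\<lambda>n. 0) \<in> Hsp"
  unfolding Hsp_def by simp

lemma Hsp_diff[simp,intro]: "v \<in> Hsp \<Longrightarrow> w \<in> Hsp \<Longrightarrow> (\<lambda>n. v n - w n) \<in> Hsp"
proof -
  assume v: "v \<in> Hsp" and w: "w \<in> Hsp"
  have "(\<lambda>n. v n + (-1) * w n) \<in> Hsp" by (rule Hsp_add[OF v Hsp_sc[OF w]])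
  moreover have "(\<lambda>n. v n + (-1) * w n) = (\<lambda>n. v n - w n)" by simp
  ultimately show ?thesis by simp
qed

lemma summ_prod: assumes "v \<in> Hsp" "w \<in> Hsp" shows "summable (\<lambda>n. v (Suc n) * cnj (w (Suc n)))"
proof -
  have sv: "summable (\<lambda>n. (cmod (v n))\<^sup>2)" and sw: "summable (\<lambda>n. (cmod (w n))\<^sup>2)"
    using assms unfolding Hsp_def by auto
  have A: "summable (\<lambda>n. (cmod (v n))\<^sup>2 + (cmod (w n))\<^sup>2)" using sv sw by (rule summable_add)
  have B: "norm (norm (v n * cnj (w n))) \<le> (cmod (v n))\<^sup>2 + (cmod (w n))\<^sup>2" for n
    by (simp add: norm_mult complex_mod_cnj ab2)
  have "summable (\<lambda>n. norm (v n * cnj (w n)))"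
    by (rule summable_comparison_test'[OF A]) (rule B)
  hence "summable (\<lambda>n. v n * cnj (w n))" by (rule summable_norm_cancel)
  thus ?thesis using summable_Suc_iff[where f="\<lambda>n. v n * cnj (w n)"] by simp
qed

lemma Bf_add1[simp]: "v \<in> Hsp \<Longrightarrow> v' \<in> Hsp \<Longrightarrow> w \<in> Hsp \<Longrightarrow> Bf (\<lambda>n. v n + v' n) w = Bf v w + Bf v' w"
  unfolding Bf_def using summ_prod[of v w] summ_prod[of v' w]
  by (simp add: distrib_right suminf_add[symmetric] algebra_simps)

lemma Bf_sc1[simp]: "v \<in> Hsp \<Longrightarrow> w \<in> Hsp \<Longrightarrow> Bf (\<lambda>n. a * v n) w = a * Bf v w"
  unfolding Bf_def using summ_prod[of v w]
  by (simp add: suminf_mult[symmetric] algebra_simps)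

lemma Bf_cnj: assumes "v \<in> Hsp" "w \<in> Hsp" shows "Bf w v = cnj (Bf v w)"
proof -
  have s: "(\<lambda>n. v (Suc n) * cnj (w (Suc n))) sums (\<Sum>n. v (Suc n) * cnj (w (Suc n)))"
    using summ_prod[OF assms] by (rule summable_sums)
  have s2: "(\<lambda>n. cnj (v (Suc n) * cnj (w (Suc n)))) sums cnj (\<Sum>n. v (Suc n) * cnj (w (Suc n)))"
    by (rule sums_cnj[THEN iffD2, OF s])
  have eq: "\<And>n. cnj (v (Suc n) * cnj (w (Suc n))) = w (Suc n) * cnj (v (Suc n))"
    by (simp add: mult.commute)
  have "(\<lambda>n. w (Suc n) * cnj (v (Suc n))) sums cnj (\<Sum>n. v (Suc n) * cnj (w (Suc n)))"
    using s2 unfolding eq .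
  hence e1: "(\<Sum>n. w (Suc n) * cnj (v (Suc n))) = cnj (\<Sum>n. v (Suc n) * cnj (w (Suc n)))"
    by (rule sums_unique[symmetric])
  have e2: "w 0 * cnj (v 0) = cnj (v 0 * cnj (w 0))" by (simp add: mult.commute)
  have "cnj (Bf v w) = cnj (v 0 * cnj (w 0)) - cnj (\<Sum>n. v (Suc n) * cnj (w (Suc n)))"
    unfolding Bf_def by (rule complex_cnj_diff)
  thus ?thesis unfolding Bf_def e1 e2 by simp
qed

lemma Bf_add2[simp]: assumes "v \<in> Hsp" "w \<in> Hsp" "w' \<in> Hsp" shows "Bf v (\<lambda>n. w n + w' n) = Bf v w + Bf v w'"
proof -
  have "Bf v (\<lambda>n. w n + w' n) = cnj (Bf (\<lambda>n. w n + w' n) v)" using Bf_cnj[of "(\<lambda>n. w n + w' n)" v] assms by simp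
  also have "\<dots> = cnj (Bf w v) + cnj (Bf w' v)" using assms by simp
  also have "\<dots> = Bf v w + Bf v w'" using Bf_cnj[of w v] Bf_cnj[of w' v] assms by simp
  finally show ?thesis .
qed

lemma Bf_sc2[simp]: assumes "v \<in> Hsp" "w \<in> Hsp" shows "Bf v (\<lambda>n. a * w n) = cnj a * Bf v w"
proof -
  have "Bf v (\<lambda>n. a * w n) = cnj (Bf (\<lambda>n. a * w n) v)" using Bf_cnj[of "(\<lambda>n. a * w n)" v] assms by simp
  also have "\<dots> = cnj a * cnj (Bf w v)" using assms by simp
  also have "\<dots> = cnj a * Bf v w" using Bf_cnj[of w v] assms by simp
  finally show ?thesis .
qed

lemma Bf_diff1[simp]: "v \<in> Hsp \<Longrightarrow> v' \<in> Hsp \<Longrightarrow> w \<in> Hsp \<Longrightarrow> Bf (\<lambda>n. v n - v' n) w = Bf v w - Bf v' w"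
proof -
  assume a: "v \<in> Hsp" "v' \<in> Hsp" "w \<in> Hsp"
  have "Bf (\<lambda>n. v n + (-1) * v' n) w = Bf v w + (-1) * Bf v' w"
    by (simp only: Bf_add1[OF a(1) Hsp_sc[OF a(2)] a(3)] Bf_sc1[OF a(2) a(3)])
  moreover have "(\<lambda>n. v n + (-1) * v' n) = (\<lambda>n. v n - v' n)" by simp
  ultimately show ?thesis by simp
qed

lemma Bf_diff2[simp]: assumes "v \<in> Hsp" "w \<in> Hsp" "w' \<in> Hsp" shows "Bf v (\<lambda>n. w n - w' n) = Bf v w - Bf v w'"
proof -
  have "Bf v (\<lambda>n. w n - w' n) = cnj (Bf (\<lambda>n. w n - w' n) v)" using Bf_cnj[of "(\<lambda>n. w n - w' n)" v] assms by simp
  also have "\<dots> = cnj (Bf w v) - cnj (Bf w' v)" using assms by simp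
  also have "\<dots> = Bf v w - Bf v w'" using Bf_cnj[of w v] Bf_cnj[of w' v] assms by simp
  finally show ?thesis .
qed

lemma Bf_zero1[simp]: "Bf (\<lambda>n. 0) w = 0" unfolding Bf_def by simp
lemma Bf_zero2[simp]: "Bf w (\<lambda>n. 0) = 0" unfolding Bf_def by simp

lemma Bf_self: assumes "v \<in> Hsp"
  shows "Bf v v = complex_of_real ((cmod (v 0))\<^sup>2 - (\<Sum>n. (cmod (v (Suc n)))\<^sup>2))"
proof -
  have s: "summable (\<lambda>n. (cmod (v (Suc n)))\<^sup>2)"
    using assms unfolding Hsp_def using summable_Suc_iff[where f="\<lambda>n. (cmod (v n))\<^sup>2"] by simp
  have cc: "z * cnj z = complex_of_real ((cmod z)\<^sup>2)" for z
    by (metis complex_norm_square of_real_power)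
  have "(\<Sum>n. v (Suc n) * cnj (v (Suc n))) = (\<Sum>n. complex_of_real ((cmod (v (Suc n)))\<^sup>2))"
    by (simp only: cc)
  also have "\<dots> = complex_of_real (\<Sum>n. (cmod (v (Suc n)))\<^sup>2)" by (rule suminf_of_real[OF s, symmetric])
  finally show ?thesis unfolding Bf_def by (simp add: cc)
qed

lemma vsc_cancel: assumes "v \<noteq> vzero" "(\<lambda>n. a * v n) = (\<lambda>n. b * v n)" shows "a = b"
proof -
  obtain n where "v n \<noteq> 0" using assms(1) unfolding vzero_def by auto
  moreover have "a * v n = b * v n" using assms(2) by meson
  ultimately show ?thesis by simp
qed

lemma E_neg_gen:
  assumes e: "e \<in> Hsp" and p: "p \<in> Hsp" and ep: "Bf e p = 0" and pp: "Re (Bf p p) > 0"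
  shows "Re (Bf e e) \<le> 0 \<and> (Bf e e = 0 \<longrightarrow> e = vzero)"
proof -
  define w where "w = (\<lambda>n. p 0 * e n - e 0 * p n)"
  have wH: "w \<in> Hsp" unfolding w_def using e p by simp
  have pe: "Bf p e = 0" using Bf_cnj[OF e p] ep by simp
  have w0: "w 0 = 0" unfolding w_def by simp
  have sw: "summable (\<lambda>n. (cmod (w (Suc n)))\<^sup>2)"
    using wH unfolding Hsp_def using summable_Suc_iff[where f="\<lambda>n. (cmod (w n))\<^sup>2"] by simp
  have ww: "Bf w w = - complex_of_real (\<Sum>n. (cmod (w (Suc n)))\<^sup>2)" using Bf_self[OF wH] w0 by simp
  have wwle: "Re (Bf w w) \<le> 0" unfolding ww using suminf_nonneg[OF sw] by simp
  have wexp: "Bf w w = p 0 * cnj (p 0) * Bf e e + e 0 * cnj (e 0) * Bf p p"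
    unfolding w_def using e p ep pe by (simp; simp add: algebra_simps)
  have p0: "p 0 \<noteq> 0"
  proof
    assume "p 0 = 0"
    hence "Re (Bf p p) = - (\<Sum>n. (cmod (p (Suc n)))\<^sup>2)" using Bf_self[OF p] by simp
    moreover have "summable (\<lambda>n. (cmod (p (Suc n)))\<^sup>2)"
      using p unfolding Hsp_def using summable_Suc_iff[where f="\<lambda>n. (cmod (p n))\<^sup>2"] by simp
    ultimately have "Re (Bf p p) \<le> 0" using suminf_nonneg by fastforce
    thus False using pp by simp
  qed
  have eer: "Bf e e = complex_of_real (Re (Bf e e))" using Bf_self[OF e] by simp
  have ppr: "Bf p p = complex_of_real (Re (Bf p p))" using Bf_self[OF p] by simp
  have reexp: "Re (Bf w w) = (cmod (p 0))\<^sup>2 * Re (Bf e e) + (cmod (e 0))\<^sup>2 * Re (Bf p p)"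
    unfolding wexp by (subst eer, subst ppr) (simp add: complex_norm_square[symmetric] flip: of_real_mult)
  have c1: "Re (Bf e e) \<le> 0"
  proof (rule ccontr)
    assume "\<not> Re (Bf e e) \<le> 0"
    hence "(cmod (p 0))\<^sup>2 * Re (Bf e e) > 0" using p0 by simp
    moreover have "(cmod (e 0))\<^sup>2 * Re (Bf p p) \<ge> 0" using pp by simp
    ultimately show False using wwle reexp by linarith
  qed
  moreover have "Bf e e = 0 \<longrightarrow> e = vzero"
  proof
    assume ee: "Bf e e = 0"
    hence "(cmod (e 0))\<^sup>2 * Re (Bf p p) \<le> 0" using wwle reexp by simp
    hence e0: "e 0 = 0" using pp by (simp add: mult_le_0_iff)
    have "Bf w w = 0" using wexp ee e0 by simp
    hence "(\<Sum>n. (cmod (w (Suc n)))\<^sup>2) = 0" using ww by simp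
    hence "\<forall>n. (cmod (w (Suc n)))\<^sup>2 = 0" using suminf_eq_zero_iff[OF sw] by simp
    hence "\<forall>n. e (Suc n) = 0" unfolding w_def using e0 p0 by simp
    hence "\<forall>n. e n = 0" using e0 by (metis not0_implies_Suc)
    thus "e = vzero" unfolding vzero_def by auto
  qed
  ultimately show ?thesis by blast
qed




lemma UB_Hsp: "T \<in> UB \<Longrightarrow> v \<in> Hsp \<Longrightarrow> T v \<in> Hsp"
  unfolding UB_def by blast

lemma UB_add: "T \<in> UB \<Longrightarrow> v \<in> Hsp \<Longrightarrow> w \<in> Hsp \<Longrightarrow> T (\<lambda>n. v n + w n) = (\<lambda>n. T v n + T w n)"
  unfolding UB_def clinear_on_def vadd_def by blast

lemma UB_sc: "T \<in> UB \<Longrightarrow> v \<in> Hsp \<Longrightarrow> T (\<lambda>n. a * v n) = (\<lambda>n. a * T v n)"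
  unfolding UB_def clinear_on_def vsc_def by blast

lemma UB_B: "T \<in> UB \<Longrightarrow> v \<in> Hsp \<Longrightarrow> w \<in> Hsp \<Longrightarrow> Bf (T v) (T w) = Bf v w"
  unfolding UB_def by blast

lemma UB_inj: "T \<in> UB \<Longrightarrow> v \<in> Hsp \<Longrightarrow> w \<in> Hsp \<Longrightarrow> T v = T w \<Longrightarrow> v = w"
  unfolding UB_def inj_on_def by blast

lemma UB_surj: assumes "T \<in> UB" "w \<in> Hsp" shows "\<exists>v\<in>Hsp. T v = w"
proof -
  have "T ` Hsp = Hsp" using assms(1) unfolding UB_def by simp
  hence "w \<in> T ` Hsp" using assms(2) by simp
  thus ?thesis by (auto simp: image_iff)
qed

lemma UB_zero: assumes "T \<in> UB" shows "T (\<lambda>n. 0) = (\<lambda>n. 0)"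
proof -
  have "T (\<lambda>n. 0 * (0::complex)) = (\<lambda>n. 0 * T (\<lambda>n. 0) n)" using UB_sc[OF assms Hsp_zero, of 0] by simp
  thus ?thesis by simp
qed

lemma UB_diff: assumes "T \<in> UB" "v \<in> Hsp" "w \<in> Hsp" shows "T (\<lambda>n. v n - w n) = (\<lambda>n. T v n - T w n)"
proof -
  have a: "T (\<lambda>n. v n + (-1) * w n) = (\<lambda>n. T v n + T (\<lambda>n. (-1) * w n) n)"
    by (rule UB_add[OF assms(1,2) Hsp_sc[OF assms(3)]])
  have b: "T (\<lambda>n. (-1) * w n) = (\<lambda>n. (-1) * T w n)" by (rule UB_sc[OF assms(1,3)])
  have c: "(\<lambda>n. v n + (-1) * w n) = (\<lambda>n. v n - w n)" by simp
  show ?thesis using a b c by simp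
qed

lemma UB_nz: assumes "T \<in> UB" "v \<in> Hsp" "v \<noteq> vzero" shows "T v \<noteq> vzero"
proof
  assume "T v = vzero"
  hence "T v = T (\<lambda>n. 0)" using UB_zero[OF assms(1)] unfolding vzero_def by simp
  hence "v = (\<lambda>n. 0)" using UB_inj[OF assms(1,2) Hsp_zero] by simp
  thus False using assms(3) unfolding vzero_def by simp
qed

lemma pe_refl: "proj_eq T T"
  unfolding proj_eq_def vsc_def by (rule exI[of _ 1]) simp

lemma pe_sym: assumes "proj_eq S T" shows "proj_eq T S"
proof -
  obtain u where u: "cmod u = 1" "\<forall>v\<in>Hsp. S v = vsc u (T v)" using assms unfolding proj_eq_def by auto
  have uu: "cnj u * u = 1" using u(1) by (metis complex_norm_square mult.commute of_real_1 power_one)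
  have "\<forall>v\<in>Hsp. T v = vsc (cnj u) (S v)" using u uu unfolding vsc_def by (auto simp: mult.assoc[symmetric])
  thus ?thesis unfolding proj_eq_def using u(1) by (intro exI[of _ "cnj u"]) simp
qed

lemma pe_trans: assumes "proj_eq R S" "proj_eq S T" shows "proj_eq R T"
proof -
  obtain u where u: "cmod u = 1" "\<forall>v\<in>Hsp. R v = vsc u (S v)" using assms(1) unfolding proj_eq_def by auto
  obtain u' where u': "cmod u' = 1" "\<forall>v\<in>Hsp. S v = vsc u' (T v)" using assms(2) unfolding proj_eq_def by auto
  have "\<forall>v\<in>Hsp. R v = vsc (u * u') (T v)" using u u' unfolding vsc_def by (auto simp: mult.assoc)
  thus ?thesis unfolding proj_eq_def using u(1) u'(1) by (intro exI[of _ "u * u'"]) (simp add: norm_mult)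
qed

lemma pe_app: assumes "proj_eq S T" obtains u where "cmod u = 1" "\<And>v. v \<in> Hsp \<Longrightarrow> S v = (\<lambda>n. u * T v n)"
  using assms unfolding proj_eq_def vsc_def by auto

lemma pe_UB: assumes pe: "proj_eq T R" and R: "R \<in> UB" shows "T \<in> UB"
proof -
  obtain u where u: "cmod u = 1" "\<And>v. v \<in> Hsp \<Longrightarrow> T v = (\<lambda>n. u * R v n)" using pe_app[OF pe] by blast
  have uu: "cnj u * u = 1" "u * cnj u = 1" using u(1) by (metis complex_norm_square mult.commute of_real_1 power_one)+
  have u0: "u \<noteq> 0" using u(1) by auto
  have img: "T ` Hsp = Hsp"
  proof
    show "T ` Hsp \<subseteq> Hsp" using u(2) UB_Hsp[OF R] by auto
    show "Hsp \<subseteq> T ` Hsp"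
    proof
      fix w assume w: "w \<in> Hsp"
      obtain v where v: "v \<in> Hsp" "R v = (\<lambda>n. cnj u * w n)" using UB_surj[OF R Hsp_sc[OF w]] by blast
      have "T v = w" using u(2)[OF v(1)] v(2) uu by (simp add: mult.assoc[symmetric])
      thus "w \<in> T ` Hsp" using v(1) by blast
    qed
  qed
  have inj: "inj_on T Hsp"
  proof (rule inj_onI)
    fix v w assume vw: "v \<in> Hsp" "w \<in> Hsp" "T v = T w"
    hence "(\<lambda>n. u * R v n) = (\<lambda>n. u * R w n)" using u(2) by simp
    hence "R v = R w" using u0 by (simp add: fun_eq_iff)
    thus "v = w" using UB_inj[OF R] vw by blast
  qed
  have lin1: "T (vadd v w) = vadd (T v) (T w)" if vw: "v \<in> Hsp" "w \<in> Hsp" for v w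
  proof -
    have "T (vadd v w) = (\<lambda>n. u * R (\<lambda>n. v n + w n) n)" unfolding vadd_def using u(2) vw by simp
    also have "\<dots> = (\<lambda>n. u * (R v n + R w n))" using UB_add[OF R vw] by simp
    also have "\<dots> = vadd (T v) (T w)" unfolding vadd_def using u(2) vw by (simp add: distrib_left)
    finally show ?thesis .
  qed
  have lin2: "T (vsc a v) = vsc a (T v)" if v: "v \<in> Hsp" for a v
  proof -
    have "T (vsc a v) = (\<lambda>n. u * R (\<lambda>n. a * v n) n)" unfolding vsc_def using u(2) v by simp
    also have "\<dots> = (\<lambda>n. u * (a * R v n))" using UB_sc[OF R v] by simp
    also have "\<dots> = vsc a (T v)" unfolding vsc_def using u(2) v by (simp add: mult.left_commute)
    finally show ?thesis .
  qed
  have lin: "clinear_on Hsp T" unfolding clinear_on_def using lin1 lin2 by blast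
  have B: "\<forall>v\<in>Hsp. \<forall>w\<in>Hsp. Bf (T v) (T w) = Bf v w"
  proof (intro ballI)
    fix v w assume vw: "v \<in> Hsp" "w \<in> Hsp"
    have "Bf (T v) (T w) = u * cnj u * Bf (R v) (R w)"
      using u(2) vw UB_Hsp[OF R] by simp
    thus "Bf (T v) (T w) = Bf v w" using uu UB_B[OF R vw] by simp
  qed
  show ?thesis unfolding UB_def using img inj lin B by blast
qed

lemma pe_comp: assumes "proj_eq f f'" "proj_eq g g'" "f \<in> UB" "g' \<in> UB"
  shows "proj_eq (f \<circ> g) (f' \<circ> g')"
proof -
  obtain u where u: "cmod u = 1" "\<And>v. v \<in> Hsp \<Longrightarrow> f v = (\<lambda>n. u * f' v n)" using pe_app[OF assms(1)] by blast
  obtain u' where u': "cmod u' = 1" "\<And>v. v \<in> Hsp \<Longrightarrow> g v = (\<lambda>n. u' * g' v n)" using pe_app[OF assms(2)] by blast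
  have "\<forall>v\<in>Hsp. (f \<circ> g) v = vsc (u' * u) ((f' \<circ> g') v)"
  proof
    fix v assume v: "v \<in> Hsp"
    have "(f \<circ> g) v = f (\<lambda>n. u' * g' v n)" using u'(2)[OF v] by simp
    also have "\<dots> = (\<lambda>n. u' * f (g' v) n)" using UB_sc[OF assms(3) UB_Hsp[OF assms(4) v]] .
    also have "\<dots> = vsc (u' * u) ((f' \<circ> g') v)" using u(2)[OF UB_Hsp[OF assms(4) v]] unfolding vsc_def by (simp add: mult.assoc)
    finally show "(f \<circ> g) v = vsc (u' * u) ((f' \<circ> g') v)" .
  qed
  thus ?thesis unfolding proj_eq_def using u(1) u'(1) by (intro exI[of _ "u' * u"]) (simp add: norm_mult)
qed

lemma hdist_sc: assumes "x \<in> Hsp" "y \<in> Hsp" "cmod u = 1" "cmod u' = 1"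
  shows "hdist (\<lambda>n. u * x n) (\<lambda>n. u' * y n) = hdist x y"
proof -
  have uu: "u * cnj u = 1" "u' * cnj u' = 1" using assms(3,4) by (metis complex_norm_square mult.commute of_real_1 power_one)+
  show ?thesis unfolding hdist_def using assms uu by (simp add: norm_mult mult.assoc[symmetric])
qed




locale ctx =
  fixes \<rho> :: "complex^2^2 \<Rightarrow> vec \<Rightarrow> vec"
    and \<eta>1 \<eta>2 :: vec
    and K :: "real \<Rightarrow> complex"
    and c :: "real \<Rightarrow> vec"
  assumes rep: "is_rep \<rho>"
    and cont: "orbitally_continuous \<rho>"
    and irr: "irreducible_rep \<rho>"
    and eta1_iso: "isotropic \<eta>1"
    and eta1_fix: "\<forall>l b. l \<noteq> 0 \<longrightarrow> fixes_line (\<rho> (gmat l b)) \<eta>1"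
    and eta1_unique: "\<forall>v. isotropic v \<and> (\<forall>l b. l \<noteq> 0 \<longrightarrow> fixes_line (\<rho> (gmat l b)) v)
                           \<longrightarrow> same_line v \<eta>1"
    and eta2_iso: "isotropic \<eta>2"
    and eta2_other: "\<not> same_line \<eta>2 \<eta>1"
    and eta2_fix: "\<forall>l. l \<noteq> 0 \<longrightarrow> fixes_line (\<rho> (gmat l 0)) \<eta>2"
    and normal: "Bf \<eta>1 \<eta>2 = 1"
    and Kc: "\<forall>b. c b \<in> Eperp \<eta>1 \<eta>2 \<and>
               (\<exists>T. proj_eq T (\<rho> (gmat 1 b)) \<and> T \<eta>1 = \<eta>1 \<and>
                    T \<eta>2 = (\<lambda>n. K b * \<eta>1 n + \<eta>2 n + c b n))"
begin

lemma e1: "\<eta>1 \<in> Hsp" "Bf \<eta>1 \<eta>1 = 0" "\<eta>1 \<noteq> vzero" using eta1_iso unfolding isotropic_def by auto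
lemma e2: "\<eta>2 \<in> Hsp" "Bf \<eta>2 \<eta>2 = 0" "\<eta>2 \<noteq> vzero" using eta2_iso unfolding isotropic_def by auto
lemma B12: "Bf \<eta>1 \<eta>2 = 1" by (rule normal)
lemma B21: "Bf \<eta>2 \<eta>1 = 1" using Bf_cnj[OF e1(1) e2(1)] normal by simp

lemma rUB: "M \<in> SU11 \<Longrightarrow> \<rho> M \<in> UB" using rep unfolding is_rep_def by blast
lemma rmul: "M \<in> SU11 \<Longrightarrow> N \<in> SU11 \<Longrightarrow> proj_eq (\<rho> (M ** N)) (\<rho> M \<circ> \<rho> N)"
  using rep unfolding is_rep_def by blast
lemma rneg: "M \<in> SU11 \<Longrightarrow> proj_eq (\<rho> (- M)) (\<rho> M)"
  using rep unfolding is_rep_def by blast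

lemma rho_comp:
  assumes "M \<in> SU11" "N \<in> SU11" "proj_eq f (\<rho> M)" "proj_eq g (\<rho> N)" "g \<in> UB"
  shows "proj_eq (\<rho> (M ** N)) (f \<circ> g)"
proof -
  have "proj_eq (\<rho> M \<circ> \<rho> N) (f \<circ> g)"
    by (rule pe_comp[OF pe_sym[OF assms(3)] pe_sym[OF assms(4)] rUB[OF assms(1)] assms(5)])
  thus ?thesis using pe_trans[OF rmul[OF assms(1,2)]] by blast
qed

definition Tb :: "real \<Rightarrow> vec \<Rightarrow> vec" where
  "Tb b = (SOME T. proj_eq T (\<rho> (gmat 1 b)) \<and> T \<eta>1 = \<eta>1 \<and> T \<eta>2 = (\<lambda>n. K b * \<eta>1 n + \<eta>2 n + c b n))"

lemma Tb: "proj_eq (Tb b) (\<rho> (gmat 1 b))" "Tb b \<eta>1 = \<eta>1" "Tb b \<eta>2 = (\<lambda>n. K b * \<eta>1 n + \<eta>2 n + c b n)"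
proof -
  have "\<exists>T. proj_eq T (\<rho> (gmat 1 b)) \<and> T \<eta>1 = \<eta>1 \<and> T \<eta>2 = (\<lambda>n. K b * \<eta>1 n + \<eta>2 n + c b n)"
    using Kc by blast
  hence "proj_eq (Tb b) (\<rho> (gmat 1 b)) \<and> Tb b \<eta>1 = \<eta>1 \<and> Tb b \<eta>2 = (\<lambda>n. K b * \<eta>1 n + \<eta>2 n + c b n)"
    unfolding Tb_def by (rule someI_ex)
  thus "proj_eq (Tb b) (\<rho> (gmat 1 b))" "Tb b \<eta>1 = \<eta>1" "Tb b \<eta>2 = (\<lambda>n. K b * \<eta>1 n + \<eta>2 n + c b n)" by auto
qed

lemma g1SU: "gmat 1 b \<in> SU11" by (rule gm_SU) simp

lemma TbUB: "Tb b \<in> UB" using pe_UB[OF Tb(1) rUB[OF g1SU]] .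

lemma cE: "c b \<in> Eperp \<eta>1 \<eta>2" using Kc by blast
lemma cH: "c b \<in> Hsp" "Bf (c b) \<eta>1 = 0" "Bf (c b) \<eta>2 = 0" using cE unfolding Eperp_def by auto
lemma cH2: "Bf \<eta>1 (c b) = 0" "Bf \<eta>2 (c b) = 0"
  using Bf_cnj[OF cH(1) e1(1), of b] Bf_cnj[OF cH(1) e2(1), of b] cH by simp_all

lemma E_neg: assumes "e \<in> Eperp \<eta>1 \<eta>2" shows "Re (Bf e e) \<le> 0 \<and> (Bf e e = 0 \<longrightarrow> e = vzero)"
proof -
  have eH: "e \<in> Hsp" "Bf e \<eta>1 = 0" "Bf e \<eta>2 = 0" using assms unfolding Eperp_def by auto
  have pH: "(\<lambda>n. \<eta>1 n + \<eta>2 n) \<in> Hsp" using e1 e2 by simp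
  have a: "Bf e (\<lambda>n. \<eta>1 n + \<eta>2 n) = 0" using eH e1 e2 by simp
  have b: "Bf (\<lambda>n. \<eta>1 n + \<eta>2 n) (\<lambda>n. \<eta>1 n + \<eta>2 n) = 2" using e1 e2 B12 B21 by simp
  show ?thesis using E_neg_gen[OF eH(1) pH a] b by simp
qed

lemma line1: assumes w: "w \<in> Hsp" "Bf w w = 0" "Bf w \<eta>1 = 0" shows "w = (\<lambda>n. Bf w \<eta>2 * \<eta>1 n)"
proof -
  define x where "x = Bf w \<eta>2"
  define e where "e = (\<lambda>n. w n - x * \<eta>1 n)"
  have w1: "Bf \<eta>1 w = 0" using Bf_cnj[OF w(1) e1(1)] w(3) by simp
  have eE: "e \<in> Eperp \<eta>1 \<eta>2" unfolding Eperp_def e_def x_def using w e1 e2 B12 by simp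
  have "Bf e e = 0" unfolding e_def using w w1 e1 e2 by simp
  hence "e = vzero" using E_neg[OF eE] by blast
  thus ?thesis unfolding e_def vzero_def x_def by (simp add: fun_eq_iff)
qed

lemma line2: assumes w: "w \<in> Hsp" "Bf w w = 0" "Bf w \<eta>2 = 0" shows "w = (\<lambda>n. Bf w \<eta>1 * \<eta>2 n)"
proof -
  define x where "x = Bf w \<eta>1"
  define e where "e = (\<lambda>n. w n - x * \<eta>2 n)"
  have w1: "Bf \<eta>2 w = 0" using Bf_cnj[OF w(1) e2(1)] w(3) by simp
  have eE: "e \<in> Eperp \<eta>1 \<eta>2" unfolding Eperp_def e_def x_def using w e1 e2 B21 by simp
  have "Bf e e = 0" unfolding e_def using w w1 e1 e2 by simp
  hence "e = vzero" using E_neg[OF eE] by blast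
  thus ?thesis unfolding e_def vzero_def x_def by (simp add: fun_eq_iff)
qed

lemma eig_prod: assumes R: "R \<in> UB" and a: "R \<eta>1 = (\<lambda>n. a * \<eta>1 n)" and a': "R \<eta>2 = (\<lambda>n. a' * \<eta>2 n)"
  shows "a * cnj a' = 1"
proof -
  have "Bf (R \<eta>1) (R \<eta>2) = 1" using UB_B[OF R e1(1) e2(1)] B12 by simp
  thus ?thesis unfolding a a' using e1 e2 B12 by simp
qed

lemma eigen:
  assumes R: "R \<in> UB" and a: "R \<eta>1 = (\<lambda>n. a * \<eta>1 n)" and a': "R \<eta>2 = (\<lambda>n. a' * \<eta>2 n)"
    and na: "cmod a \<noteq> 1" and w: "w \<in> Hsp" "Bf w w = 0" and mu: "R w = (\<lambda>n. \<mu> * w n)"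
  shows "w = (\<lambda>n. Bf w \<eta>2 * \<eta>1 n) \<or> w = (\<lambda>n. Bf w \<eta>1 * \<eta>2 n)"
proof -
  have aa: "a * cnj a' = 1" by (rule eig_prod[OF R a a'])
  have x: "\<mu> * cnj a' * Bf w \<eta>2 = Bf w \<eta>2"
  proof -
    have "Bf (R w) (R \<eta>2) = Bf w \<eta>2" using UB_B[OF R w(1) e2(1)] .
    thus ?thesis unfolding mu a' using w e2 by (simp add: mult.assoc)
  qed
  have y: "\<mu> * cnj a * Bf w \<eta>1 = Bf w \<eta>1"
  proof -
    have "Bf (R w) (R \<eta>1) = Bf w \<eta>1" using UB_B[OF R w(1) e1(1)] .
    thus ?thesis unfolding mu a using w e1 by (simp add: mult.assoc)
  qed
  show ?thesis
  proof (cases "Bf w \<eta>2 = 0 \<or> Bf w \<eta>1 = 0")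
    case True
    thus ?thesis using line1[OF w] line2[OF w] by blast
  next
    case False
    hence "\<mu> * cnj a' = 1" "\<mu> * cnj a = 1" using x y by auto
    hence "cnj a' = cnj a" by (metis mult_cancel_left mult_zero_left zero_neq_one)
    hence "a * cnj a = 1" using aa by simp
    hence "(cmod a)\<^sup>2 = 1" by (metis complex_norm_square of_real_eq_1_iff)
    hence "cmod a = 1" using norm_ge_zero[of a] by (auto simp: power2_eq_1_iff)
    thus ?thesis using na by simp
  qed
qed

lemma Tb_iso: "K b + cnj (K b) + Bf (c b) (c b) = 0"
proof -
  have "Bf (Tb b \<eta>2) (Tb b \<eta>2) = 0" using UB_B[OF TbUB e2(1) e2(1)] e2 by simp
  thus ?thesis unfolding Tb(3) using e1 e2 cH[of b] cH2[of b] B12 B21 by (simp add: algebra_simps)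
qed

lemma ReK: "0 \<le> Re (K b)" "K b = 0 \<Longrightarrow> c b = vzero"
proof -
  have "Bf (c b) (c b) = - (K b + cnj (K b))" using Tb_iso[of b] by (simp only: add_eq_0_iff)
  hence r: "Re (Bf (c b) (c b)) = - 2 * Re (K b)" by simp
  moreover have "Re (Bf (c b) (c b)) \<le> 0" using E_neg[OF cE, of b] by blast
  ultimately show "0 \<le> Re (K b)" by simp
  show "K b = 0 \<Longrightarrow> c b = vzero" using E_neg[OF cE, of b] Tb_iso[of b] by simp
qed

lemma fix2: assumes "Tb b \<eta>2 = (\<lambda>n. \<mu> * \<eta>2 n)" shows "K b = 0" "c b = vzero"
proof -
  have "Bf (Tb b \<eta>2) \<eta>2 = 0" unfolding assms using e2 by simp
  hence "K b = 0" unfolding Tb(3) using e1 e2 cH[of b] B12 by simp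
  thus "K b = 0" "c b = vzero" using ReK(2) by auto
qed

end



context ctx begin

lemma gSU: "l \<noteq> 0 \<Longrightarrow> gmat l b \<in> SU11" by (rule gm_SU)

lemma eigs: assumes "l \<noteq> 0"
  shows "\<exists>a a'. \<rho> (gmat l 0) \<eta>1 = (\<lambda>n. a * \<eta>1 n) \<and> \<rho> (gmat l 0) \<eta>2 = (\<lambda>n. a' * \<eta>2 n) \<and> a * cnj a' = 1"
proof -
  obtain a where a: "\<rho> (gmat l 0) \<eta>1 = (\<lambda>n. a * \<eta>1 n)" using eta1_fix assms unfolding fixes_line_def vsc_def by blast
  obtain a' where a': "\<rho> (gmat l 0) \<eta>2 = (\<lambda>n. a' * \<eta>2 n)" using eta2_fix assms unfolding fixes_line_def vsc_def by blast
  show ?thesis using a a' eig_prod[OF rUB[OF gSU[OF assms]] a a'] by blast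
qed

lemma Kscale:
  assumes l: "l \<noteq> 0" and a: "\<rho> (gmat l 0) \<eta>1 = (\<lambda>n. a * \<eta>1 n)" and a': "\<rho> (gmat l 0) \<eta>2 = (\<lambda>n. a' * \<eta>2 n)"
  shows "a' * K (l^2 * b) = a * K b"
proof -
  define R where "R = \<rho> (gmat l 0)"
  define b' where "b' = l^2 * b"
  have RU: "R \<in> UB" unfolding R_def by (rule rUB[OF gSU[OF l]])
  have aa: "a * cnj a' = 1" using eig_prod[OF RU] a a' unfolding R_def by blast
  have P: "proj_eq (\<rho> (gmat l 0 ** gmat 1 b)) (R \<circ> Tb b)"
    unfolding R_def by (rule rho_comp[OF gSU[OF l] g1SU pe_refl Tb(1) TbUB])
  have Q: "proj_eq (\<rho> (gmat 1 b' ** gmat l 0)) (Tb b' \<circ> R)"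
    unfolding R_def by (rule rho_comp[OF g1SU gSU[OF l] Tb(1) pe_refl rUB[OF gSU[OF l]]])
  have "gmat l 0 ** gmat 1 b = gmat 1 b' ** gmat l 0" unfolding b'_def by (rule rel2[OF l])
  hence "proj_eq (R \<circ> Tb b) (Tb b' \<circ> R)" using pe_trans[OF pe_sym[OF P]] Q by simp
  then obtain u where u: "cmod u = 1" "\<And>v. v \<in> Hsp \<Longrightarrow> R (Tb b v) = (\<lambda>n. u * Tb b' (R v) n)"
    by (rule pe_app) auto
  have a0: "a \<noteq> 0"
  proof
    assume "a = 0"
    hence "R \<eta>1 = vzero" using a unfolding R_def vzero_def by simp
    thus False using UB_nz[OF RU e1(1) e1(3)] by simp
  qed
  have a'0: "a' \<noteq> 0" using aa by auto
  have "(\<lambda>n. a * \<eta>1 n) = (\<lambda>n. (u * a) * \<eta>1 n)"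
  proof -
    have "R (Tb b \<eta>1) = (\<lambda>n. u * Tb b' (R \<eta>1) n)" using u(2)[OF e1(1)] .
    hence "R \<eta>1 = (\<lambda>n. u * Tb b' (\<lambda>n. a * \<eta>1 n) n)" using Tb(2) a unfolding R_def by simp
    also have "\<dots> = (\<lambda>n. (u * a) * \<eta>1 n)" using UB_sc[OF TbUB e1(1)] Tb(2) by (simp add: mult.assoc)
    finally show ?thesis using a unfolding R_def by simp
  qed
  hence "a = u * a" using vsc_cancel[OF e1(3)] by blast
  hence u1: "u = 1" using a0 by simp
  have cH': "R (c b) \<in> Hsp" using UB_Hsp[OF RU cH(1)] .
  have Rc: "Bf (R (c b)) \<eta>2 = 0"
  proof -
    have "Bf (R (c b)) (R \<eta>2) = 0" using UB_B[OF RU cH(1) e2(1)] cH by simp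
    hence "cnj a' * Bf (R (c b)) \<eta>2 = 0" using a' cH' e2 unfolding R_def by simp
    thus ?thesis using a'0 by simp
  qed
  have L: "R (Tb b \<eta>2) = (\<lambda>n. K b * (a * \<eta>1 n) + a' * \<eta>2 n + R (c b) n)"
  proof -
    have "R (Tb b \<eta>2) = R (\<lambda>n. (\<lambda>n. K b * \<eta>1 n + \<eta>2 n) n + c b n)" unfolding Tb(3) by simp
    also have "\<dots> = (\<lambda>n. R (\<lambda>n. K b * \<eta>1 n + \<eta>2 n) n + R (c b) n)"
      using UB_add[OF RU _ cH(1)] e1 e2 by simp
    also have "R (\<lambda>n. K b * \<eta>1 n + \<eta>2 n) = (\<lambda>n. R (\<lambda>n. K b * \<eta>1 n) n + R \<eta>2 n)"
      using UB_add[OF RU _ e2(1)] e1 by simp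
    also have "R (\<lambda>n. K b * \<eta>1 n) = (\<lambda>n. K b * R \<eta>1 n)" using UB_sc[OF RU e1(1)] .
    finally show ?thesis using a a' unfolding R_def by simp
  qed
  have Rr: "Tb b' (R \<eta>2) = (\<lambda>n. a' * (K b' * \<eta>1 n + \<eta>2 n + c b' n))"
    using a' UB_sc[OF TbUB e2(1)] Tb(3) unfolding R_def by simp
  have "R (Tb b \<eta>2) = Tb b' (R \<eta>2)" using u(2)[OF e2(1)] u1 by simp
  hence "(\<lambda>n. K b * (a * \<eta>1 n) + a' * \<eta>2 n + R (c b) n) = (\<lambda>n. a' * (K b' * \<eta>1 n + \<eta>2 n + c b' n))"
    using L Rr by simp
  hence "Bf (\<lambda>n. K b * (a * \<eta>1 n) + a' * \<eta>2 n + R (c b) n) \<eta>2 = Bf (\<lambda>n. a' * (K b' * \<eta>1 n + \<eta>2 n + c b' n)) \<eta>2"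
    by simp
  hence "K b * a = a' * K b'" using e1 e2 cH'  cH[of b'] Rc B12 by (simp add: mult.assoc)
  thus ?thesis unfolding b'_def by (simp add: mult.commute)
qed


lemma unit_cnj: "cmod u = 1 \<Longrightarrow> u * cnj u = 1"
  by (metis complex_norm_square mult.commute of_real_1 power_one)

lemma nohyp: "\<exists>l a. l \<noteq> 0 \<and> \<rho> (gmat l 0) \<eta>1 = (\<lambda>n. a * \<eta>1 n) \<and> cmod a \<noteq> 1"
proof (rule ccontr)
  assume "\<not> ?thesis"
  hence H: "\<And>l a. l \<noteq> 0 \<Longrightarrow> \<rho> (gmat l 0) \<eta>1 = (\<lambda>n. a * \<eta>1 n) \<Longrightarrow> cmod a = 1" by blast
  have Kinv: "K (l^2 * b) = K b" if l: "l \<noteq> 0" for l b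
  proof -
    obtain a a' where aa: "\<rho> (gmat l 0) \<eta>1 = (\<lambda>n. a * \<eta>1 n)" "\<rho> (gmat l 0) \<eta>2 = (\<lambda>n. a' * \<eta>2 n)" "a * cnj a' = 1"
      using eigs[OF l] by blast
    have "cmod a = 1" using H[OF l aa(1)] .
    hence "a * cnj a = 1" by (rule unit_cnj)
    hence "cnj a' = cnj a" using aa(3) by (metis mult_cancel_left mult_zero_left zero_neq_one)
    hence "a' = a" by simp
    moreover have "a \<noteq> 0" using aa(3) by auto
    ultimately show ?thesis using Kscale[OF l aa(1) aa(2), of b] by simp
  qed
  define p where "p = (\<lambda>n. \<eta>1 n + \<eta>2 n)"
  have pH: "p \<in> Hsp" unfolding p_def using e1 e2 by simp
  have pp: "Bf p p = 2" unfolding p_def using e1 e2 B12 B21 by simp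
  have ppos: "pos_vec p" unfolding pos_vec_def using pH pp by simp
  have K0: "K 0 = 0 \<and> c 0 = vzero"
  proof -
    obtain a' where a': "\<rho> (gmat 1 0) \<eta>2 = (\<lambda>n. a' * \<eta>2 n)" using eta2_fix unfolding fixes_line_def vsc_def by force
    obtain u where u: "cmod u = 1" "\<And>v. v \<in> Hsp \<Longrightarrow> Tb 0 v = (\<lambda>n. u * \<rho> (gmat 1 0) v n)" using pe_app[OF Tb(1)] by blast
    have "Tb 0 \<eta>2 = (\<lambda>n. (u * a') * \<eta>2 n)" using u(2)[OF e2(1)] a' by (simp add: mult.assoc)
    thus ?thesis using fix2 by blast
  qed
  have TbP: "Tb s p = (\<lambda>n. \<eta>1 n + (K s * \<eta>1 n + \<eta>2 n + c s n))" for s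
    unfolding p_def using UB_add[OF TbUB e1(1) e2(1)] Tb(2) Tb(3) by simp
  have Tb0p: "Tb 0 p = p" using TbP[of 0] K0 unfolding p_def vzero_def by simp
  have hd: "hdist (Tb s p) p = arcosh (cmod (2 + K s) / 2)" for s
  proof -
    have TpH: "Tb s p \<in> Hsp" using UB_Hsp[OF TbUB pH] .
    have a: "Bf (Tb s p) (Tb s p) = 2" using UB_B[OF TbUB pH pH] pp by simp
    have b: "Bf (Tb s p) p = 2 + K s"
      unfolding TbP unfolding p_def using e1 e2 B12 B21 cH[of s] by simp
    have "sqrt (2 * 2) = (2::real)" by simp
    thus ?thesis unfolding hdist_def a b pp by simp
  qed
  have rhop: "\<exists>u. cmod u = 1 \<and> \<rho> (gmat 1 s) p = (\<lambda>n. u * Tb s p n)" for s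
  proof -
    obtain u where "cmod u = 1" "\<And>v. v \<in> Hsp \<Longrightarrow> \<rho> (gmat 1 s) v = (\<lambda>n. u * Tb s v n)"
      using pe_app[OF pe_sym[OF Tb(1)]] by blast
    thus ?thesis using pH by blast
  qed
  have bound: "cmod (2 + K b) \<le> 2" for b
  proof (rule ccontr)
    assume "\<not> cmod (2 + K b) \<le> 2"
    hence gt: "cmod (2 + K b) / 2 > 1" by simp
    define \<epsilon> where "\<epsilon> = arcosh (cmod (2 + K b) / 2)"
    have epos: "\<epsilon> > 0" unfolding \<epsilon>_def using gt arcosh_real_gt_1_iff[of "cmod (2 + K b) / 2"] by simp
    obtain \<delta> where d: "\<delta> > 0" "\<And>M. M \<in> SU11 \<Longrightarrow> dist M (gmat 1 0) < \<delta> \<Longrightarrow> hdist (\<rho> M p) (\<rho> (gmat 1 0) p) < \<epsilon>"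
      using cont ppos g1SU[of 0] epos unfolding orbitally_continuous_def by metis
    obtain t where t: "t > 0" "dist (gmat 1 (t*b)) (gmat 1 0) < \<delta>" using gmat_near[OF d(1)] by blast
    have lt: "hdist (\<rho> (gmat 1 (t*b)) p) (\<rho> (gmat 1 0) p) < \<epsilon>" using d(2)[OF g1SU t(2)] .
    obtain u1 where u1: "cmod u1 = 1" "\<rho> (gmat 1 (t*b)) p = (\<lambda>n. u1 * Tb (t*b) p n)" using rhop by blast
    obtain u0 where u0: "cmod u0 = 1" "\<rho> (gmat 1 0) p = (\<lambda>n. u0 * Tb 0 p n)" using rhop by blast
    have "hdist (\<rho> (gmat 1 (t*b)) p) (\<rho> (gmat 1 0) p) = hdist (Tb (t*b) p) (Tb 0 p)"
      unfolding u1(2) u0(2) by (rule hdist_sc[OF UB_Hsp[OF TbUB pH] UB_Hsp[OF TbUB pH] u1(1) u0(1)])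
    also have "\<dots> = arcosh (cmod (2 + K (t*b)) / 2)" unfolding Tb0p by (rule hd)
    also have "K (t*b) = K b"
    proof -
      have "sqrt t \<noteq> 0" "(sqrt t)^2 = t" using t(1) by auto
      thus ?thesis using Kinv[of "sqrt t" b] by simp
    qed
    finally have "\<epsilon> < \<epsilon>" using lt unfolding \<epsilon>_def by simp
    thus False by simp
  qed
  have Kz: "K b = 0" for b
  proof -
    have "Re (2 + K b) \<le> 2" using complex_Re_le_cmod[of "2 + K b"] bound[of b] by linarith
    hence r0: "Re (K b) = 0" using ReK(1)[of b] by simp
    have "(cmod (2 + K b))\<^sup>2 \<le> 4" using bound[of b] norm_ge_zero[of "2 + K b"]
      by (metis power_mono numeral_Bit0 numeral_One power2_eq_square one_add_one mult_2 one_plus_numeral)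
    hence "4 + (Im (K b))\<^sup>2 \<le> 4" using r0 unfolding cmod_power2 by simp
    hence "Im (K b) = 0" by simp
    thus ?thesis using r0 by (simp add: complex_eq_iff)
  qed
  have Tbe2: "Tb b \<eta>2 = \<eta>2" for b
    using Tb(3)[of b] Kz[of b] ReK(2)[OF Kz[of b]] unfolding vzero_def by simp
  have fixall: "fixes_line (\<rho> (gmat l b)) \<eta>2" if l: "l \<noteq> 0" for l b
  proof -
    obtain a a' where aa: "\<rho> (gmat l 0) \<eta>1 = (\<lambda>n. a * \<eta>1 n)" "\<rho> (gmat l 0) \<eta>2 = (\<lambda>n. a' * \<eta>2 n)" "a * cnj a' = 1"
      using eigs[OF l] by blast
    have P: "proj_eq (\<rho> (gmat 1 (b*l) ** gmat l 0)) (Tb (b*l) \<circ> \<rho> (gmat l 0))"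
      by (rule rho_comp[OF g1SU gSU[OF l] Tb(1) pe_refl rUB[OF gSU[OF l]]])
    hence P': "proj_eq (\<rho> (gmat l b)) (Tb (b*l) \<circ> \<rho> (gmat l 0))" using rel3[OF l, of b] by simp
    obtain u where u: "cmod u = 1" "\<And>v. v \<in> Hsp \<Longrightarrow> \<rho> (gmat l b) v = (\<lambda>n. u * (Tb (b*l) \<circ> \<rho> (gmat l 0)) v n)"
      using pe_app[OF P'] by blast
    have "\<rho> (gmat l b) \<eta>2 = (\<lambda>n. u * Tb (b*l) (\<lambda>n. a' * \<eta>2 n) n)" using u(2)[OF e2(1)] aa(2) by simp
    also have "\<dots> = (\<lambda>n. (u * a') * \<eta>2 n)" using UB_sc[OF TbUB e2(1)] Tbe2 by (simp add: mult.assoc)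
    finally show ?thesis unfolding fixes_line_def vsc_def by blast
  qed
  have "same_line \<eta>2 \<eta>1" using eta1_unique eta2_iso fixall by blast
  thus False using eta2_other by blast
qed

end



context ctx begin

lemma SUB: "\<rho> smat \<in> UB" by (rule rUB[OF sm_SU])

lemma Sfix:
  assumes l: "l \<noteq> 0" and v: "v \<in> Hsp" and beta: "\<rho> (gmat (1/l) 0) v = (\<lambda>n. \<beta> * v n)"
  shows "\<exists>\<mu>. \<rho> (gmat l 0) (\<rho> smat v) = (\<lambda>n. \<mu> * \<rho> smat v n)"
proof -
  have l': "1/l \<noteq> 0" using l by simp
  have P: "proj_eq (\<rho> (smat ** gmat (1/l) 0)) (\<rho> smat \<circ> \<rho> (gmat (1/l) 0))" by (rule rmul[OF sm_SU gSU[OF l']])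
  have Q: "proj_eq (\<rho> (gmat l 0 ** smat)) (\<rho> (gmat l 0) \<circ> \<rho> smat)" by (rule rmul[OF gSU[OF l] sm_SU])
  have "proj_eq (\<rho> smat \<circ> \<rho> (gmat (1/l) 0)) (\<rho> (gmat l 0) \<circ> \<rho> smat)"
    using pe_trans[OF pe_sym[OF P]] Q rel4[OF l] by simp
  then obtain u where u: "cmod u = 1" "\<And>x. x \<in> Hsp \<Longrightarrow> \<rho> smat (\<rho> (gmat (1/l) 0) x) = (\<lambda>n. u * \<rho> (gmat l 0) (\<rho> smat x) n)"
    by (rule pe_app) auto
  have "\<rho> smat (\<lambda>n. \<beta> * v n) = (\<lambda>n. u * \<rho> (gmat l 0) (\<rho> smat v) n)" using u(2)[OF v] beta by simp
  hence "(\<lambda>n. \<beta> * \<rho> smat v n) = (\<lambda>n. u * \<rho> (gmat l 0) (\<rho> smat v) n)" using UB_sc[OF SUB v] by simp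
  hence "\<rho> (gmat l 0) (\<rho> smat v) = (\<lambda>n. (\<beta> / u) * \<rho> smat v n)" using u(1)
    by (auto simp: fun_eq_iff field_simps dest: spec)
  thus ?thesis by blast
qed

lemma allfix_contra:
  assumes w1: "\<rho> smat \<eta>1 = (\<lambda>n. x * \<eta>1 n)" shows False
proof -
  have fx: "fixes_line (\<rho> M) \<eta>1" if M: "M \<in> SU11" for M
  proof -
    from bruhat[OF M] show ?thesis
    proof
      assume "\<exists>l b. l \<noteq> 0 \<and> M = gmat l b"
      thus ?thesis using eta1_fix by blast
    next
      assume "\<exists>l b1 b2. l \<noteq> 0 \<and> M = gmat l b1 ** smat ** gmat 1 b2"
      then obtain l b1 b2 where l: "l \<noteq> 0" and Me: "M = gmat l b1 ** smat ** gmat 1 b2" by blast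
      obtain g where g: "\<rho> (gmat 1 b2) \<eta>1 = (\<lambda>n. g * \<eta>1 n)" using eta1_fix unfolding fixes_line_def vsc_def by force
      obtain g' where g': "\<rho> (gmat l b1) \<eta>1 = (\<lambda>n. g' * \<eta>1 n)" using eta1_fix l unfolding fixes_line_def vsc_def by force
      have SU1: "gmat l b1 ** smat \<in> SU11" by (rule SU_mult[OF gSU[OF l] sm_SU])
      have P1: "proj_eq (\<rho> (gmat l b1 ** smat)) (\<rho> (gmat l b1) \<circ> \<rho> smat)" by (rule rmul[OF gSU[OF l] sm_SU])
      have P2: "proj_eq (\<rho> M) ((\<rho> (gmat l b1) \<circ> \<rho> smat) \<circ> \<rho> (gmat 1 b2))"
        unfolding Me by (rule rho_comp[OF SU1 g1SU pe_sym[OF P1] pe_refl rUB[OF g1SU]])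
      obtain u where u: "cmod u = 1" "\<And>v. v \<in> Hsp \<Longrightarrow> \<rho> M v = (\<lambda>n. u * ((\<rho> (gmat l b1) \<circ> \<rho> smat) \<circ> \<rho> (gmat 1 b2)) v n)"
        using pe_app[OF P2] by blast
      have "\<rho> M \<eta>1 = (\<lambda>n. u * \<rho> (gmat l b1) (\<rho> smat (\<lambda>n. g * \<eta>1 n)) n)" using u(2)[OF e1(1)] g by simp
      also have "\<rho> smat (\<lambda>n. g * \<eta>1 n) = (\<lambda>n. g * (x * \<eta>1 n))" using UB_sc[OF SUB e1(1)] w1 by simp
      also have "\<rho> (gmat l b1) (\<lambda>n. g * (x * \<eta>1 n)) = (\<lambda>n. (g * x) * \<rho> (gmat l b1) \<eta>1 n)"
        using UB_sc[OF rUB[OF gSU[OF l]] e1(1), where a="g * x"] by (simp add: mult.assoc)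
      finally have "\<rho> M \<eta>1 = (\<lambda>n. (u * (g * x) * g') * \<eta>1 n)" using g' by (simp add: mult.assoc)
      thus ?thesis unfolding fixes_line_def vsc_def by blast
    qed
  qed
  have "\<eta>1 \<in> Hsp \<and> \<eta>1 \<noteq> vzero \<and> Re (Bf \<eta>1 \<eta>1) \<ge> 0 \<and> (\<forall>M\<in>SU11. fixes_line (\<rho> M) \<eta>1)"
    using e1 fx by simp
  thus False using irr unfolding irreducible_rep_def by blast
qed

lemma Sswap: "\<exists>\<alpha> \<beta>. \<rho> smat \<eta>1 = (\<lambda>n. \<alpha> * \<eta>2 n) \<and> \<rho> smat \<eta>2 = (\<lambda>n. \<beta> * \<eta>1 n) \<and> \<alpha> * cnj \<beta> = 1"
proof -
  obtain l a0 where l: "l \<noteq> 0" and a0: "\<rho> (gmat l 0) \<eta>1 = (\<lambda>n. a0 * \<eta>1 n)" "cmod a0 \<noteq> 1" using nohyp by blast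
  obtain a a' where aa: "\<rho> (gmat l 0) \<eta>1 = (\<lambda>n. a * \<eta>1 n)" "\<rho> (gmat l 0) \<eta>2 = (\<lambda>n. a' * \<eta>2 n)" "a * cnj a' = 1"
    using eigs[OF l] by blast
  have "a0 = a" using vsc_cancel[OF e1(3)] a0(1) aa(1) by metis
  hence na: "cmod a \<noteq> 1" using a0 by simp
  have l': "1/l \<noteq> 0" using l by simp
  obtain b1 where b1: "\<rho> (gmat (1/l) 0) \<eta>1 = (\<lambda>n. b1 * \<eta>1 n)" using eta1_fix l' unfolding fixes_line_def vsc_def by force
  obtain b2 where b2: "\<rho> (gmat (1/l) 0) \<eta>2 = (\<lambda>n. b2 * \<eta>2 n)" using eta2_fix l' unfolding fixes_line_def vsc_def by force
  define w1 where "w1 = \<rho> smat \<eta>1"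
  define w2 where "w2 = \<rho> smat \<eta>2"
  have w1H: "w1 \<in> Hsp" "Bf w1 w1 = 0" unfolding w1_def using UB_Hsp[OF SUB e1(1)] UB_B[OF SUB e1(1) e1(1)] e1 by auto
  have w2H: "w2 \<in> Hsp" "Bf w2 w2 = 0" unfolding w2_def using UB_Hsp[OF SUB e2(1)] UB_B[OF SUB e2(1) e2(1)] e2 by auto
  have w1nz: "w1 \<noteq> vzero" unfolding w1_def by (rule UB_nz[OF SUB e1(1) e1(3)])
  obtain m1 where m1: "\<rho> (gmat l 0) w1 = (\<lambda>n. m1 * w1 n)" using Sfix[OF l e1(1) b1] unfolding w1_def by blast
  obtain m2 where m2: "\<rho> (gmat l 0) w2 = (\<lambda>n. m2 * w2 n)" using Sfix[OF l e2(1) b2] unfolding w2_def by blast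
  have c1: "w1 = (\<lambda>n. Bf w1 \<eta>2 * \<eta>1 n) \<or> w1 = (\<lambda>n. Bf w1 \<eta>1 * \<eta>2 n)"
    by (rule eigen[OF rUB[OF gSU[OF l]] aa(1) aa(2) na w1H m1])
  have c2: "w2 = (\<lambda>n. Bf w2 \<eta>2 * \<eta>1 n) \<or> w2 = (\<lambda>n. Bf w2 \<eta>1 * \<eta>2 n)"
    by (rule eigen[OF rUB[OF gSU[OF l]] aa(1) aa(2) na w2H m2])
  have A: "w1 = (\<lambda>n. Bf w1 \<eta>1 * \<eta>2 n)" using c1 allfix_contra unfolding w1_def by blast
  define y1 where "y1 = Bf w1 \<eta>1"
  have A': "w1 = (\<lambda>n. y1 * \<eta>2 n)" unfolding y1_def by (rule A)
  have S1: "\<rho> smat \<eta>1 = (\<lambda>n. y1 * \<eta>2 n)" using A' unfolding w1_def .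
  have y1nz: "y1 \<noteq> 0" using A' w1nz unfolding vzero_def by auto
  have B: "w2 = (\<lambda>n. Bf w2 \<eta>2 * \<eta>1 n)"
  proof -
    { assume h: "w2 = (\<lambda>n. Bf w2 \<eta>1 * \<eta>2 n)"
      define y2 where "y2 = Bf w2 \<eta>1"
      have h': "w2 = (\<lambda>n. y2 * \<eta>2 n)" unfolding y2_def by (rule h)
      have S2: "\<rho> smat \<eta>2 = (\<lambda>n. y2 * \<eta>2 n)" using h' unfolding w2_def .
      have "\<rho> smat (\<lambda>n. y2 * \<eta>1 n) = (\<lambda>n. y2 * (y1 * \<eta>2 n))"
        using UB_sc[OF SUB e1(1), where a=y2] S1 by simp
      moreover have "\<rho> smat (\<lambda>n. y1 * \<eta>2 n) = (\<lambda>n. y1 * (y2 * \<eta>2 n))"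
        using UB_sc[OF SUB e2(1), where a=y1] S2 by simp
      ultimately have "\<rho> smat (\<lambda>n. y2 * \<eta>1 n) = \<rho> smat (\<lambda>n. y1 * \<eta>2 n)" by (simp add: mult.left_commute)
      hence "(\<lambda>n. y2 * \<eta>1 n) = (\<lambda>n. y1 * \<eta>2 n)" using UB_inj[OF SUB] e1 e2 by simp
      hence "Bf (\<lambda>n. y2 * \<eta>1 n) \<eta>1 = Bf (\<lambda>n. y1 * \<eta>2 n) \<eta>1" by simp
      hence "y1 = 0" using e1 e2 B21 by simp
      hence False using y1nz by simp }
    thus ?thesis using c2 by blast
  qed
  define x2 where "x2 = Bf w2 \<eta>2"
  have B': "w2 = (\<lambda>n. x2 * \<eta>1 n)" unfolding x2_def by (rule B)
  have S2: "\<rho> smat \<eta>2 = (\<lambda>n. x2 * \<eta>1 n)" using B' unfolding w2_def .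
  have "Bf (\<rho> smat \<eta>1) (\<rho> smat \<eta>2) = 1" using UB_B[OF SUB e1(1) e2(1)] B12 by simp
  hence "y1 * cnj x2 = 1" unfolding S1 S2 using e1 e2 B21 by simp
  thus ?thesis using S1 S2 by blast
qed

end



context ctx begin

lemma main: "\<exists>\<nu>::real. \<nu> > 0 \<and> (\<exists>S A.
           proj_eq S (\<rho> smat) \<and>
           S \<eta>1 = vsc (complex_of_real \<nu>) \<eta>2 \<and>
           S \<eta>2 = vsc (complex_of_real (1 / \<nu>)) \<eta>1 \<and>
           (\<forall>v\<in>Eperp \<eta>1 \<eta>2. S v = A v) \<and>
           A ` Eperp \<eta>1 \<eta>2 = Eperp \<eta>1 \<eta>2 \<and> inj_on A (Eperp \<eta>1 \<eta>2) \<and>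
           clinear_on (Eperp \<eta>1 \<eta>2) A \<and>
           (\<forall>v\<in>Eperp \<eta>1 \<eta>2. \<forall>w\<in>Eperp \<eta>1 \<eta>2. Bf (A v) (A w) = Bf v w) \<and>
           (\<forall>b. b \<noteq> 0 \<longrightarrow> A (c b) = vsc (complex_of_real \<nu> * K b) (c (- 1 / b))))"
proof -
  obtain \<alpha> \<beta> where ab: "\<rho> smat \<eta>1 = (\<lambda>n. \<alpha> * \<eta>2 n)" "\<rho> smat \<eta>2 = (\<lambda>n. \<beta> * \<eta>1 n)" "\<alpha> * cnj \<beta> = 1"
    using Sswap by blast
  define \<nu> where "\<nu> = cmod \<alpha>"
  have a0: "\<alpha> \<noteq> 0" using ab(3) by auto
  have npos: "\<nu> > 0" using a0 unfolding \<nu>_def by simp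
  define N where "N = complex_of_real \<nu>"
  have N0: "N \<noteq> 0" unfolding N_def using npos by simp
  have cN: "cnj N = N" unfolding N_def by simp
  define r where "r = complex_of_real (1/\<nu>)"
  have cN': "cnj r = r" unfolding r_def by simp
  define v where "v = cnj \<alpha> / N"
  have vu: "cmod v = 1" unfolding v_def N_def \<nu>_def using a0 by (simp add: norm_divide)
  have aa: "cnj \<alpha> * \<alpha> = N * N" unfolding N_def \<nu>_def
    by (metis complex_norm_square mult.commute of_real_mult power2_eq_square)
  have va: "v * \<alpha> = N" unfolding v_def using aa N0 by (simp add: field_simps)
  have ab2: "cnj \<alpha> * \<beta> = 1" using arg_cong[OF ab(3), of cnj] by simp
  have vb: "v * \<beta> = r" unfolding v_def r_def using ab2 N0 unfolding N_def by (simp add: field_simps)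
  define S' where "S' = (\<lambda>x. (\<lambda>n. v * \<rho> smat x n))"
  have S'pe: "proj_eq S' (\<rho> smat)" unfolding proj_eq_def S'_def vsc_def using vu by blast
  have S'U: "S' \<in> UB" by (rule pe_UB[OF S'pe SUB])
  have S1: "S' \<eta>1 = (\<lambda>n. N * \<eta>2 n)" unfolding S'_def ab(1) using va by (simp add: mult.assoc[symmetric])
  have S2: "S' \<eta>2 = (\<lambda>n. r * \<eta>1 n)" unfolding S'_def ab(2) using vb by (simp add: mult.assoc[symmetric])
  have EH: "Eperp \<eta>1 \<eta>2 \<subseteq> Hsp" unfolding Eperp_def by auto
  have r0: "r \<noteq> 0" unfolding r_def using npos by simp
  have imsub: "S' e \<in> Eperp \<eta>1 \<eta>2" if e: "e \<in> Eperp \<eta>1 \<eta>2" for e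
  proof -
    have eH: "e \<in> Hsp" "Bf e \<eta>1 = 0" "Bf e \<eta>2 = 0" using e unfolding Eperp_def by auto
    have SeH: "S' e \<in> Hsp" using UB_Hsp[OF S'U eH(1)] .
    have "Bf (S' e) (S' \<eta>1) = 0" using UB_B[OF S'U eH(1) e1(1)] eH by simp
    hence "N * Bf (S' e) \<eta>2 = 0" unfolding S1 using SeH e2 cN by simp
    hence a: "Bf (S' e) \<eta>2 = 0" using N0 by simp
    have "Bf (S' e) (S' \<eta>2) = 0" using UB_B[OF S'U eH(1) e2(1)] eH by simp
    hence "r * Bf (S' e) \<eta>1 = 0" unfolding S2 using SeH e1 cN' by simp
    hence b: "Bf (S' e) \<eta>1 = 0" using r0 by simp
    show ?thesis unfolding Eperp_def using SeH a b by simp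
  qed
  have img: "S' ` Eperp \<eta>1 \<eta>2 = Eperp \<eta>1 \<eta>2"
  proof
    show "S' ` Eperp \<eta>1 \<eta>2 \<subseteq> Eperp \<eta>1 \<eta>2" using imsub by blast
    show "Eperp \<eta>1 \<eta>2 \<subseteq> S' ` Eperp \<eta>1 \<eta>2"
    proof
      fix e assume e: "e \<in> Eperp \<eta>1 \<eta>2"
      have eH: "e \<in> Hsp" "Bf e \<eta>1 = 0" "Bf e \<eta>2 = 0" using e unfolding Eperp_def by auto
      obtain x where x: "x \<in> Hsp" "S' x = e" using UB_surj[OF S'U eH(1)] by blast
      have "Bf x \<eta>1 = Bf (S' x) (S' \<eta>1)" using UB_B[OF S'U x(1) e1(1)] by simp
      also have "\<dots> = 0" unfolding x(2) S1 using eH e2 by simp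
      finally have x1: "Bf x \<eta>1 = 0" .
      have "Bf x \<eta>2 = Bf (S' x) (S' \<eta>2)" using UB_B[OF S'U x(1) e2(1)] by simp
      also have "\<dots> = 0" unfolding x(2) S2 using eH e1 by simp
      finally have x2: "Bf x \<eta>2 = 0" .
      have "x \<in> Eperp \<eta>1 \<eta>2" unfolding Eperp_def using x(1) x1 x2 by simp
      thus "e \<in> S' ` Eperp \<eta>1 \<eta>2" using x(2) by blast
    qed
  qed
  have inj: "inj_on S' (Eperp \<eta>1 \<eta>2)" using UB_inj[OF S'U] EH by (meson inj_onI subsetD)
  have lin: "clinear_on (Eperp \<eta>1 \<eta>2) S'" using S'U EH unfolding UB_def clinear_on_def by blast
  have Bp: "\<forall>x\<in>Eperp \<eta>1 \<eta>2. \<forall>y\<in>Eperp \<eta>1 \<eta>2. Bf (S' x) (S' y) = Bf x y" using UB_B[OF S'U] EH by blast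
  have crel: "S' (c b) = vsc (complex_of_real \<nu> * K b) (c (- 1 / b))" if b: "b \<noteq> 0" for b
  proof -
    define x where "x = -1/b"
    have lam: "1/b \<noteq> 0" using b by simp
    obtain a2 where a2: "\<rho> (gmat (1/b) 0) \<eta>2 = (\<lambda>n. a2 * \<eta>2 n)" using eta2_fix lam unfolding fixes_line_def vsc_def by force
    have RU: "\<rho> (gmat (1/b) 0) \<in> UB" by (rule rUB[OF gSU[OF lam]])
    have P1: "proj_eq (\<rho> (smat ** gmat 1 b)) (S' \<circ> Tb b)" by (rule rho_comp[OF sm_SU g1SU S'pe Tb(1) TbUB])
    have P2: "proj_eq (\<rho> (smat ** gmat 1 b ** smat)) ((S' \<circ> Tb b) \<circ> S')"
      by (rule rho_comp[OF SU_mult[OF sm_SU g1SU] sm_SU pe_sym[OF P1] S'pe S'U])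
    have Q1: "proj_eq (\<rho> (gmat 1 x ** gmat (1/b) 0)) (Tb x \<circ> \<rho> (gmat (1/b) 0))"
      by (rule rho_comp[OF g1SU gSU[OF lam] Tb(1) pe_refl RU])
    have Q2: "proj_eq (\<rho> (gmat 1 x ** gmat (1/b) 0 ** smat)) ((Tb x \<circ> \<rho> (gmat (1/b) 0)) \<circ> S')"
      by (rule rho_comp[OF SU_mult[OF g1SU gSU[OF lam]] sm_SU pe_sym[OF Q1] S'pe S'U])
    have NSU: "gmat 1 x ** gmat (1/b) 0 ** smat \<in> SU11" by (rule SU_mult[OF SU_mult[OF g1SU gSU[OF lam]] sm_SU])
    have Q3: "proj_eq (\<rho> (gmat 1 x ** gmat (1/b) 0 ** smat ** gmat 1 x)) (((Tb x \<circ> \<rho> (gmat (1/b) 0)) \<circ> S') \<circ> Tb x)"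
      by (rule rho_comp[OF NSU g1SU pe_sym[OF Q2] Tb(1) TbUB])
    have Q4: "proj_eq (\<rho> (- (gmat 1 x ** gmat (1/b) 0 ** smat ** gmat 1 x))) (\<rho> (gmat 1 x ** gmat (1/b) 0 ** smat ** gmat 1 x))"
      by (rule rneg[OF SU_mult[OF NSU g1SU]])
    have M: "smat ** gmat 1 b ** smat = - (gmat 1 x ** gmat (1/b) 0 ** smat ** gmat 1 x)"
      unfolding x_def by (rule rel5[OF b])
    have "proj_eq ((S' \<circ> Tb b) \<circ> S') (((Tb x \<circ> \<rho> (gmat (1/b) 0)) \<circ> S') \<circ> Tb x)"
      using pe_trans[OF pe_sym[OF P2] pe_trans[OF _ Q3]] Q4 M by simp
    then obtain u where u: "cmod u = 1"
      "\<And>y. y \<in> Hsp \<Longrightarrow> S' (Tb b (S' y)) = (\<lambda>n. u * Tb x (\<rho> (gmat (1/b) 0) (S' (Tb x y))) n)"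
      by (rule pe_app) auto
    define Sc where "Sc = S' (c b)"
    have ScE: "Sc \<in> Eperp \<eta>1 \<eta>2" unfolding Sc_def by (rule imsub[OF cE])
    have ScH: "Sc \<in> Hsp" "Bf Sc \<eta>1 = 0" "Bf Sc \<eta>2 = 0" using ScE unfolding Eperp_def by auto
    have L1: "S' (Tb b \<eta>2) = (\<lambda>n. K b * (N * \<eta>2 n) + r * \<eta>1 n + Sc n)"
    proof -
      have "S' (Tb b \<eta>2) = S' (\<lambda>n. (\<lambda>n. K b * \<eta>1 n + \<eta>2 n) n + c b n)" unfolding Tb(3) by simp
      also have "\<dots> = (\<lambda>n. S' (\<lambda>n. K b * \<eta>1 n + \<eta>2 n) n + S' (c b) n)"
        using UB_add[OF S'U _ cH(1)] e1 e2 by simp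
      also have "S' (\<lambda>n. K b * \<eta>1 n + \<eta>2 n) = (\<lambda>n. S' (\<lambda>n. K b * \<eta>1 n) n + S' \<eta>2 n)"
        using UB_add[OF S'U _ e2(1)] e1 by simp
      also have "S' (\<lambda>n. K b * \<eta>1 n) = (\<lambda>n. K b * S' \<eta>1 n)" using UB_sc[OF S'U e1(1)] .
      finally show ?thesis unfolding Sc_def S1 S2 by simp
    qed
    have LHS: "S' (Tb b (S' \<eta>1)) = (\<lambda>n. N * (K b * (N * \<eta>2 n) + r * \<eta>1 n + Sc n))"
    proof -
      have "Tb b (S' \<eta>1) = (\<lambda>n. N * Tb b \<eta>2 n)" unfolding S1 using UB_sc[OF TbUB e2(1)] .
      hence "S' (Tb b (S' \<eta>1)) = (\<lambda>n. N * S' (Tb b \<eta>2) n)" using UB_sc[OF S'U UB_Hsp[OF TbUB e2(1)]] by simp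
      thus ?thesis unfolding L1 .
    qed
    have RHS: "Tb x (\<rho> (gmat (1/b) 0) (S' (Tb x \<eta>1))) = (\<lambda>n. (N * a2) * (K x * \<eta>1 n + \<eta>2 n + c x n))"
    proof -
      have "\<rho> (gmat (1/b) 0) (S' (Tb x \<eta>1)) = (\<lambda>n. (N * a2) * \<eta>2 n)"
        unfolding Tb(2) S1 using UB_sc[OF RU e2(1)] a2 by (simp add: mult.assoc)
      thus ?thesis using UB_sc[OF TbUB e2(1)] Tb(3) by simp
    qed
    have EQ: "(\<lambda>n. N * (K b * (N * \<eta>2 n) + r * \<eta>1 n + Sc n))
            = (\<lambda>n. u * ((N * a2) * (K x * \<eta>1 n + \<eta>2 n + c x n)))"
      using u(2)[OF e1(1)] LHS RHS by simp
    have cxH: "c x \<in> Hsp" "Bf (c x) \<eta>1 = 0" "Bf (c x) \<eta>2 = 0" using cH by auto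
    have Nr: "N * r = 1" unfolding N_def r_def using npos by (simp flip: of_real_mult)
    have E1: "N * (K b * N) = u * (N * a2)"
    proof -
      have "Bf (\<lambda>n. N * (K b * (N * \<eta>2 n) + r * \<eta>1 n + Sc n)) \<eta>1
          = Bf (\<lambda>n. u * ((N * a2) * (K x * \<eta>1 n + \<eta>2 n + c x n))) \<eta>1" using EQ by simp
      thus ?thesis using e1 e2 ScH cxH B21 by simp
    qed
    have E2: "1 = u * (N * a2) * K x"
    proof -
      have "Bf (\<lambda>n. N * (K b * (N * \<eta>2 n) + r * \<eta>1 n + Sc n)) \<eta>2
          = Bf (\<lambda>n. u * ((N * a2) * (K x * \<eta>1 n + \<eta>2 n + c x n))) \<eta>2" using EQ by simp
      hence "N * r = u * (N * a2) * K x" using e1 e2 ScH cxH B12 by (simp add: mult.assoc)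
      thus ?thesis using Nr by simp
    qed
    have pt: "Sc n = N * K b * c x n" for n
    proof -
      define P where "P = u * (N * a2)"
      have en: "N * (K b * (N * \<eta>2 n) + r * \<eta>1 n + Sc n) = P * (K x * \<eta>1 n + \<eta>2 n + c x n)"
        using fun_cong[OF EQ, of n] unfolding P_def by (simp add: mult.assoc)
      have "N * (K b * N) * \<eta>2 n + (N * r) * \<eta>1 n + N * Sc n
          = (P * K x) * \<eta>1 n + P * \<eta>2 n + P * c x n" using en by (simp add: algebra_simps)
      hence e2: "N * (K b * N) * \<eta>2 n + \<eta>1 n + N * Sc n = \<eta>1 n + P * \<eta>2 n + P * c x n"
        using Nr E2 unfolding P_def by (simp only: mult_1 mult.assoc[symmetric] flip: E2)
      have s2: "P = N * (K b * N)" unfolding P_def using E1 by (rule sym)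
      have "N * Sc n = P * c x n" using e2 unfolding s2 by (simp add: algebra_simps)
      hence "N * Sc n = N * (N * K b * c x n)" unfolding s2 by (simp add: algebra_simps)
      thus ?thesis using N0 by simp
    qed
    show ?thesis unfolding vsc_def x_def[symmetric] using pt unfolding Sc_def N_def by auto
  qed
  show ?thesis
    apply (rule exI[of _ \<nu>])
    apply (intro conjI npos exI[of _ S'])
    using S'pe S1 S2 img inj lin Bp crel unfolding vsc_def N_def r_def by auto
qed

end

theorem mainTheorem9:
  fixes \<rho> :: "complex^2^2 \<Rightarrow> vec \<Rightarrow> vec"
    and \<eta>1 \<eta>2 :: vec
    and K :: "real \<Rightarrow> complex"
    and c :: "real \<Rightarrow> vec"
  assumes rep: "is_rep \<rho>"
    and cont: "orbitally_continuous \<rho>"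
    and irr: "irreducible_rep \<rho>"
    and eta1_iso: "isotropic \<eta>1"
    and eta1_fix: "\<forall>l b. l \<noteq> 0 \<longrightarrow> fixes_line (\<rho> (gmat l b)) \<eta>1"
    and eta1_unique: "\<forall>v. isotropic v \<and> (\<forall>l b. l \<noteq> 0 \<longrightarrow> fixes_line (\<rho> (gmat l b)) v)
                           \<longrightarrow> same_line v \<eta>1"
    and eta2_iso: "isotropic \<eta>2"
    and eta2_other: "\<not> same_line \<eta>2 \<eta>1"
    and eta2_fix: "\<forall>l. l \<noteq> 0 \<longrightarrow> fixes_line (\<rho> (gmat l 0)) \<eta>2"
    and normal: "Bf \<eta>1 \<eta>2 = 1"
    and Kc: "\<forall>b. c b \<in> Eperp \<eta>1 \<eta>2 \<and>
               (\<exists>T. proj_eq T (\<rho> (gmat 1 b)) \<and> T \<eta>1 = \<eta>1 \<and>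
                    T \<eta>2 = (\<lambda>n. K b * \<eta>1 n + \<eta>2 n + c b n))"
  shows "\<exists>\<nu>::real. \<nu> > 0 \<and> (\<exists>S A.
           proj_eq S (\<rho> smat) \<and>
           S \<eta>1 = vsc (complex_of_real \<nu>) \<eta>2 \<and>
           S \<eta>2 = vsc (complex_of_real (1 / \<nu>)) \<eta>1 \<and>
           (\<forall>v\<in>Eperp \<eta>1 \<eta>2. S v = A v) \<and>
           A ` Eperp \<eta>1 \<eta>2 = Eperp \<eta>1 \<eta>2 \<and> inj_on A (Eperp \<eta>1 \<eta>2) \<and>
           clinear_on (Eperp \<eta>1 \<eta>2) A \<and>
           (\<forall>v\<in>Eperp \<eta>1 \<eta>2. \<forall>w\<in>Eperp \<eta>1 \<eta>2. Bf (A v) (A w) = Bf v w) \<and>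
           (\<forall>b. b \<noteq> 0 \<longrightarrow> A (c b) = vsc (complex_of_real \<nu> * K b) (c (- 1 / b))))"
proof -
  have "ctx \<rho> \<eta>1 \<eta>2 K c" unfolding ctx_def using assms by blast
  thus ?thesis by (rule ctx.main)
qed

end
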